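(* For every $\lambda\in(0,1)$, the ladder surface $X_\lambda$ admits an orientation-preserving affine homeomorphism with derivative $$R=\begin{pmatrix}-1&-1\\1&0\end{pmatrix},$$ which is an elliptic element of order $3$ in $\mathrm{PSL}(2,\mathbb{R})$. Equivalently, after applying the linear map $\begin{pmatrix}1&1/2\\0&\sqrt3/2\end{pmatrix}$ to $X_\lambda$, the resulting surface has the rotation by $2\pi/3$ in its Veech group.
   Context: Notation: for $\lambda>0$ put $s_{-1}=0$ and $s_n=\sum_{i=0}^{n}\lambda^i$ for $n\ge 0$. Let $L_\lambda$ be the infinite polygonal path with consecutive vertices $(0,0),(s_0,0)$ and then, for $n\ge1$, the two vertices $(s_n,s_{n-2})$ and $(s_n,s_{n-1})$. Let $U_\lambda$ be its reflection in the line $y=x$. The \emph{ladder surface} $X_\lambda$ is the translation surface obtained from the open region bounded by $L_\lambda$ and $U_\lambda$ by identifying, via translation, each edge of $L_\lambda$ with the edge of $U_\lambda$ that is parallel to it and of the same length. Vertices are not points of $X_\lambda$. An affine homeomorphism is one that is locally of the form $z\mapsto Az+t$ in translation charts; the matrix $A$ is its derivative. The Veech group is the image in $\mathrm{PSL}(2,\mathbb{R})$ of the derivatives of orientation-preserving affine homeomorphisms. *)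

theory Defs
  imports "HOL-Analysis.Analysis"
begin

text \<open>s_n = sum_{i=0}^n lam^i for n >= 0, and s_n = 0 for n < 0 (only s_{-1} = 0 is used).\<close>
definition ladder_s :: "real \<Rightarrow> int \<Rightarrow> real" where
  "ladder_s lam n = (if n < 0 then 0 else (\<Sum>i\<le>nat n. lam ^ i))"

text \<open>Consecutive vertices of L: (0,0), (s_0,0), then for n >= 1 the vertices
  (s_n, s_{n-2}) (index 2n) and (s_n, s_{n-1}) (index 2n+1).\<close>
definition Lvert :: "real \<Rightarrow> nat \<Rightarrow> real^2" where
  "Lvert lam k =
     (if k = 0 then vector [0, 0]
      else if k = 1 then vector [ladder_s lam 0, 0]
      else if even k then vector [ladder_s lam (int (k div 2)), ladder_s lam (int (k div 2) - 2)]
      else vector [ladder_s lam (int (k div 2)), ladder_s lam (int (k div 2) - 1)])"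

definition Uvert :: "real \<Rightarrow> nat \<Rightarrow> real^2" where
  "Uvert lam k = vector [Lvert lam k $ 2, Lvert lam k $ 1]"

definition Lpath :: "real \<Rightarrow> (real^2) set" where
  "Lpath lam = (\<Union>k. closed_segment (Lvert lam k) (Lvert lam (Suc k)))"

definition Upath :: "real \<Rightarrow> (real^2) set" where
  "Upath lam = (\<Union>k. closed_segment (Uvert lam k) (Uvert lam (Suc k)))"

text \<open>The open region bounded by L and U (the bounded complementary region of the
  closed curve formed by L, U and their common limit point).\<close>
definition ladder_region :: "real \<Rightarrow> (real^2) set" where
  "ladder_region lam = inside (closure (Lpath lam \<union> Upath lam))"

definition ladder_Y :: "real \<Rightarrow> (real^2) set" where
  "ladder_Y lam = ladder_region lam
     \<union> (\<Union>k. open_segment (Lvert lam k) (Lvert lam (Suc k)))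
     \<union> (\<Union>k. open_segment (Uvert lam k) (Uvert lam (Suc k)))"

definition ladder_glue :: "real \<Rightarrow> real^2 \<Rightarrow> real^2 \<Rightarrow> bool" where
  "ladder_glue lam p q \<longleftrightarrow>
     (\<exists>k j tau. p \<in> open_segment (Lvert lam k) (Lvert lam (Suc k))
        \<and> (\<lambda>x. x + tau) ` closed_segment (Lvert lam k) (Lvert lam (Suc k))
            = closed_segment (Uvert lam j) (Uvert lam (Suc j))
        \<and> q = p + tau)"

definition ladder_rel :: "real \<Rightarrow> ((real^2) \<times> (real^2)) set" where
  "ladder_rel lam = {(p, q). p \<in> ladder_Y lam \<and> q \<in> ladder_Y lam
        \<and> (p = q \<or> ladder_glue lam p q \<or> ladder_glue lam q p)}"

definition ladder_X :: "real \<Rightarrow> (real^2) set set" where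
  "ladder_X lam = ladder_Y lam // ladder_rel lam"

definition ladder_proj :: "real \<Rightarrow> real^2 \<Rightarrow> (real^2) set" where
  "ladder_proj lam y = ladder_rel lam `` {y}"

definition ladder_open :: "real \<Rightarrow> (real^2) set set \<Rightarrow> bool" where
  "ladder_open lam W \<longleftrightarrow> W \<subseteq> ladder_X lam
     \<and> openin (top_of_set (ladder_Y lam)) {y \<in> ladder_Y lam. ladder_proj lam y \<in> W}"

lemma istopology_ladder_open: "istopology (ladder_open lam)"
  unfolding istopology_def
proof (intro conjI allI impI)
  fix S T assume "ladder_open lam S" "ladder_open lam T"
  moreover have "{y \<in> ladder_Y lam. ladder_proj lam y \<in> S \<inter> T}
      = {y \<in> ladder_Y lam. ladder_proj lam y \<in> S} \<inter> {y \<in> ladder_Y lam. ladder_proj lam y \<in> T}" by auto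
  ultimately show "ladder_open lam (S \<inter> T)"
    unfolding ladder_open_def by (auto intro: openin_Int)
next
  fix K assume K: "\<forall>S\<in>K. ladder_open lam S"
  have "{y \<in> ladder_Y lam. ladder_proj lam y \<in> \<Union>K}
      = (\<Union>S\<in>K. {y \<in> ladder_Y lam. ladder_proj lam y \<in> S})" by auto
  moreover have "openin (top_of_set (ladder_Y lam)) (\<Union>S\<in>K. {y \<in> ladder_Y lam. ladder_proj lam y \<in> S})"
    using K unfolding ladder_open_def by (intro openin_Union) auto
  ultimately show "ladder_open lam (\<Union>K)"
    using K unfolding ladder_open_def by auto
qed

definition ladder_top :: "real \<Rightarrow> (real^2) set topology" where
  "ladder_top lam = topology (ladder_open lam)"

text \<open>Translation charts: open embeddings into the plane which, on the open region
  (where the identity is a chart), differ locally from the identity by a translation.\<close>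
definition translation_chart :: "real \<Rightarrow> (real^2) set set \<Rightarrow> ((real^2) set \<Rightarrow> real^2) \<Rightarrow> bool" where
  "translation_chart lam W \<phi> \<longleftrightarrow>
     openin (ladder_top lam) W \<and> open (\<phi> ` W)
     \<and> homeomorphic_map (subtopology (ladder_top lam) W) (top_of_set (\<phi> ` W)) \<phi>
     \<and> (\<forall>x \<in> ladder_region lam. ladder_proj lam x \<in> W \<longrightarrow>
          (\<exists>d>0. \<forall>y \<in> ball x d. y \<in> ladder_region lam \<and> ladder_proj lam y \<in> W
              \<and> \<phi> (ladder_proj lam y) - y = \<phi> (ladder_proj lam x) - x))"

definition ladder_affine_homeo :: "real \<Rightarrow> real^2^2 \<Rightarrow> ((real^2) set \<Rightarrow> (real^2) set) \<Rightarrow> bool" where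
  "ladder_affine_homeo lam A f \<longleftrightarrow>
     homeomorphic_map (ladder_top lam) (ladder_top lam) f
     \<and> (\<forall>P \<in> ladder_X lam. \<exists>W \<phi> W' \<psi> N t.
          translation_chart lam W \<phi> \<and> translation_chart lam W' \<psi>
          \<and> openin (ladder_top lam) N \<and> P \<in> N \<and> N \<subseteq> W \<and> f ` N \<subseteq> W'
          \<and> (\<forall>Q \<in> N. \<psi> (f Q) = A *v \<phi> Q + t))"

definition orientation_preserving_affine :: "real \<Rightarrow> real^2^2 \<Rightarrow> ((real^2) set \<Rightarrow> (real^2) set) \<Rightarrow> bool" where
  "orientation_preserving_affine lam A f \<longleftrightarrow> ladder_affine_homeo lam A f \<and> det A > 0"

text \<open>The matrix R = ((-1,-1),(1,0)) (given by its rows).\<close>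
definition Rmat :: "real^2^2" where
  "Rmat = vector [vector [-1, -1], vector [1, 0]]"

end

theory Submission
  imports Defs
begin


definition pt :: "real \<Rightarrow> real \<Rightarrow> real^2" where "pt a b = vector [a, b]"

lemma pt_nth [simp]: "pt a b $ 1 = a" "pt a b $ 2 = b"
  by (simp_all add: pt_def)

lemma pt_eq_iff [simp]: "pt a b = pt c d \<longleftrightarrow> a = c \<and> b = d"
  by (auto simp: pt_def vec_eq_iff forall_2)

lemma pt_expand: "z = pt (z$1) (z$2)"
  by (simp add: vec_eq_iff forall_2)

lemma pt_add [simp]: "pt a b + pt c d = pt (a+c) (b+d)"
  by (simp add: vec_eq_iff forall_2)
lemma pt_diff [simp]: "pt a b - pt c d = pt (a-c) (b-d)"
  by (simp add: vec_eq_iff forall_2)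
lemma pt_scale [simp]: "u *\<^sub>R pt a b = pt (u*a) (u*b)"
  by (simp add: vec_eq_iff forall_2)
lemma pt_uminus [simp]: "- pt a b = pt (-a) (-b)"
  by (simp add: vec_eq_iff forall_2)
lemma pt_zero: "0 = pt 0 0"
  by (simp add: vec_eq_iff forall_2)

lemma norm_pt: "norm (pt a b) = sqrt (a^2 + b^2)"
  by (simp add: norm_vec_def L2_set_def UNIV_2 power2_eq_square)

lemma dist_pt: "dist (pt a b) (pt c d) = sqrt ((a-c)^2 + (b-d)^2)"
  by (simp add: dist_norm norm_pt)

lemma abs_le_norm_pt1: "\<bar>a\<bar> \<le> norm (pt a b)"
  by (simp add: norm_pt real_le_rsqrt)
lemma abs_le_norm_pt2: "\<bar>b\<bar> \<le> norm (pt a b)"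
  by (simp add: norm_pt real_le_rsqrt)

lemma comp1_le_dist: "\<bar>z$1 - w$1\<bar> \<le> dist z w"
  by (metis dist_norm vector_minus_component component_le_norm_cart)
lemma comp2_le_dist: "\<bar>z$2 - w$2\<bar> \<le> dist z w"
  by (metis dist_norm vector_minus_component component_le_norm_cart)

definition tt :: "real \<Rightarrow> nat \<Rightarrow> real" where
  "tt lam k = ladder_s lam (int k - 2)"

lemma tt_0 [simp]: "tt lam 0 = 0" and tt_1 [simp]: "tt lam (Suc 0) = 0"
  by (simp_all add: tt_def ladder_s_def)

lemma tt_SS: "tt lam (Suc (Suc k)) = (\<Sum>i\<le>k. lam ^ i)"
  by (simp add: tt_def ladder_s_def)

lemma tt_2 [simp]: "tt lam 2 = 1"
  using tt_SS[of lam 0] by (simp add: numeral_2_eq_2)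

lemma tt_Suc: assumes "1 \<le> k" shows "tt lam (Suc k) = tt lam k + lam ^ (k - 1)"
proof (cases k)
  case 0 then show ?thesis using assms by simp
next
  case (Suc m)
  then show ?thesis
  proof (cases m)
    case 0 with Suc show ?thesis by (simp add: tt_SS)
  next
    case (Suc n) with \<open>k = Suc m\<close> show ?thesis by (simp add: tt_SS)
  qed
qed

lemma ladder_s_tt: "0 \<le> n \<Longrightarrow> ladder_s lam n = tt lam (nat n + 2)"
  by (simp add: tt_def)

locale lad =
  fixes lam :: real
  assumes lam_pos: "0 < lam" and lam_lt1: "lam < 1"
begin

abbreviation t where "t \<equiv> tt lam"

definition Sl where "Sl = 1 / (1 - lam)"

lemma t_Suc_ge: "t k \<le> t (Suc k)"
proof (cases "k \<ge> 1")
  case True then show ?thesis using tt_Suc[OF True, of lam] lam_pos by simp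
next
  case False then have "k = 0" by simp
  then show ?thesis by simp
qed

lemma t_mono: "i \<le> k \<Longrightarrow> t i \<le> t k"
  by (induction k rule: dec_induct) (auto intro: order_trans t_Suc_ge)

lemma t_Suc_gt: "1 \<le> k \<Longrightarrow> t k < t (Suc k)"
  using tt_Suc[of k lam] lam_pos by simp

lemma t_strict: "1 \<le> i \<Longrightarrow> i < k \<Longrightarrow> t i < t k"
proof (induction k rule: nat_less_induct)
  case (1 k)
  then obtain m where k: "k = Suc m" "i \<le> m" by (cases k) auto
  show ?case
  proof (cases "i = m")
    case True then show ?thesis using k t_Suc_gt 1 by simp
  next
    case False
    then have "t i < t m" using 1 k by auto
    also have "\<dots> \<le> t k" using k t_Suc_ge by simp
    finally show ?thesis .
  qed
qed

lemma t_nonneg: "0 \<le> t k"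
  using t_mono[of 0 k] by simp

lemma t_less_imp: "t i < t k \<Longrightarrow> i < k"
  using t_mono[of k i] by (meson not_less)

lemma t_le_imp: "t i \<le> t k \<Longrightarrow> 1 \<le> k \<Longrightarrow> i \<le> k"
  using t_strict[of k i] by (meson not_less)

lemma t_inj: "1 \<le> i \<Longrightarrow> 1 \<le> k \<Longrightarrow> t i = t k \<Longrightarrow> i = k"
  by (metis le_antisym order.refl t_le_imp)

lemma t_pos: "2 \<le> k \<Longrightarrow> 0 < t k"
  using t_strict[of 1 k] by simp

lemma t_lt_Sl: "t k < Sl"
proof (cases k)
  case 0 then show ?thesis using lam_lt1 by (simp add: Sl_def)
next
  case (Suc m)
  then show ?thesis
  proof (cases m)
    case 0 then show ?thesis using Suc lam_lt1 by (simp add: Sl_def)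
  next
    case (Suc n)
    have "(\<Sum>i\<le>n. lam ^ i) = (1 - lam ^ Suc n) / (1 - lam)"
      using lam_lt1 sum_gp_strict[of lam "Suc n"] by (simp add: lessThan_Suc_atMost[symmetric])
    also have "\<dots> < 1 / (1 - lam)"
      using lam_lt1 lam_pos by (simp add: divide_strict_right_mono)
    finally show ?thesis using \<open>k = Suc m\<close> Suc by (simp add: tt_SS Sl_def)
  qed
qed

lemma t_lim: "t \<longlonglongrightarrow> Sl"
proof -
  have "(\<lambda>n. t (Suc (Suc n))) \<longlonglongrightarrow> Sl"
    unfolding tt_SS Sl_def
    using LIMSEQ_Suc[OF geometric_sums[of lam, unfolded sums_def]] lam_pos lam_lt1
    by (simp add: lessThan_Suc_atMost)
  then have "(\<lambda>n. t (n + 2)) \<longlonglongrightarrow> Sl" by (simp add: numeral_2_eq_2)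
  then show ?thesis by (rule LIMSEQ_offset)
qed

lemma Sl_pos: "1 < Sl"
  using t_lt_Sl[of 2] by simp

end


lemma add_3_Suc [simp]: "n + 3 = Suc (Suc (Suc n))" by simp

lemma pt_eq_iff2: "z = pt a b \<longleftrightarrow> z$1 = a \<and> z$2 = b"
  by (auto simp: pt_def vec_eq_iff forall_2)

lemma closed_seg_h:
  assumes "a \<le> b"
  shows "closed_segment (pt a c) (pt b c) = {z. z$2 = c \<and> a \<le> z$1 \<and> z$1 \<le> b}"
proof (intro set_eqI iffI)
  fix z :: "real^2" assume "z \<in> closed_segment (pt a c) (pt b c)"
  then obtain u where u: "0 \<le> u" "u \<le> 1" "z = (1 - u) *\<^sub>R pt a c + u *\<^sub>R pt b c"
    by (auto simp: in_segment)
  have "u*a \<le> u*b" "(1-u)*a \<le> (1-u)*b" using u assms by (simp_all add: mult_left_mono)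
  then have "a \<le> (1-u)*a + u*b" "(1-u)*a + u*b \<le> b" by (simp_all add: algebra_simps)
  moreover have "(1-u)*c + u*c = c" by (simp add: algebra_simps)
  ultimately show "z \<in> {z. z$2 = c \<and> a \<le> z$1 \<and> z$1 \<le> b}" using u by simp
next
  fix z :: "real^2" assume z: "z \<in> {z. z$2 = c \<and> a \<le> z$1 \<and> z$1 \<le> b}"
  show "z \<in> closed_segment (pt a c) (pt b c)"
  proof (cases "a = b")
    case True
    with z have "z = pt a c" by (subst pt_expand) auto
    then show ?thesis by simp
  next
    case False
    define u where "u = (z$1 - a) / (b - a)"
    have u: "0 \<le> u" "u \<le> 1" using z assms False by (auto simp: u_def divide_simps)
    have "u*(b-a) = z$1 - a" using False assms by (simp add: u_def)
    then have "(1-u)*a + u*b = z$1" by (simp add: algebra_simps)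
    moreover have "(1-u)*c + u*c = c" by (simp add: algebra_simps)
    ultimately have "z = (1 - u) *\<^sub>R pt a c + u *\<^sub>R pt b c"
      using z by (subst pt_expand) simp
    then show ?thesis using u by (auto simp: in_segment)
  qed
qed

lemma open_seg_h:
  assumes "a < b"
  shows "open_segment (pt a c) (pt b c) = {z. z$2 = c \<and> a < z$1 \<and> z$1 < b}"
  using assms unfolding open_segment_def closed_seg_h[OF less_imp_le[OF assms]]
  by (auto simp: pt_eq_iff2)

definition sw :: "real^2 \<Rightarrow> real^2" where "sw z = pt (z$2) (z$1)"

lemma sw_pt [simp]: "sw (pt a b) = pt b a" by (simp add: sw_def)
lemma sw_nth [simp]: "sw z $ 1 = z $ 2" "sw z $ 2 = z $ 1" by (simp_all add: sw_def)
lemma sw_sw [simp]: "sw (sw z) = z" by (metis sw_def pt_nth pt_expand)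
lemma sw_linear: "linear sw"
  by (rule linearI) (simp_all add: sw_def vec_eq_iff forall_2)
lemma sw_inj: "inj sw" by (metis injI sw_sw)
lemma sw_add: "sw (a + b) = sw a + sw b" by (simp add: sw_def)
lemma sw_diff: "sw (a - b) = sw a - sw b" by (simp add: sw_def)
lemma sw_dist [simp]: "dist (sw a) (sw b) = dist a b"
  by (metis dist_pt pt_expand sw_def add.commute)
lemma sw_image_sw [simp]: "sw ` sw ` A = A" by (simp add: image_image)
lemma sw_in_image: "z \<in> sw ` A \<longleftrightarrow> sw z \<in> A"
  by (metis image_iff sw_sw)

lemma closed_seg_v:
  assumes "a \<le> b"
  shows "closed_segment (pt c a) (pt c b) = {z. z$1 = c \<and> a \<le> z$2 \<and> z$2 \<le> b}"
proof -
  have "closed_segment (pt c a) (pt c b) = sw ` closed_segment (pt a c) (pt b c)"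
    using closed_segment_linear_image[OF sw_linear, of "pt a c" "pt b c"] by simp
  then show ?thesis using closed_seg_h[OF assms] by (auto simp: sw_in_image)
qed

lemma open_seg_v:
  assumes "a < b"
  shows "open_segment (pt c a) (pt c b) = {z. z$1 = c \<and> a < z$2 \<and> z$2 < b}"
proof -
  have "open_segment (pt c a) (pt c b) = sw ` open_segment (pt a c) (pt b c)"
    using open_segment_linear_image[OF sw_linear sw_inj, of "pt a c" "pt b c"] by simp
  then show ?thesis using open_seg_h[OF assms] by (auto simp: sw_in_image)
qed

lemma Uvert_sw: "Uvert lam k = sw (Lvert lam k)"
  by (simp add: Uvert_def sw_def pt_def)

lemma Lvert_0: "Lvert lam 0 = pt 0 0"
  by (simp add: Lvert_def pt_def)
lemma Lvert_odd: "Lvert lam (Suc (2*n)) = pt (tt lam (n+2)) (tt lam (n+1))"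
proof (cases n)
  case 0 then show ?thesis using tt_SS[of lam 0] by (simp add: Lvert_def pt_def ladder_s_def)
next
  case (Suc m)
  then show ?thesis
    by (simp add: Lvert_def pt_def tt_def algebra_simps)
qed
lemma Lvert_even: "Lvert lam (2*n+2) = pt (tt lam (n+3)) (tt lam (n+1))"
  by (simp add: Lvert_def pt_def tt_def algebra_simps)

lemma parity_cases3: "k = 0 \<or> (\<exists>n. k = Suc (2*n)) \<or> (\<exists>n::nat. k = 2*n+2)"
  by presburger

context lad begin

definition LH :: "nat \<Rightarrow> (real^2) set" where "LH j = {z. z$2 = t j \<and> t (j+1) < z$1 \<and> z$1 < t (j+2)}"
definition LV :: "nat \<Rightarrow> (real^2) set" where "LV j = {z. z$1 = t (j+2) \<and> t j < z$2 \<and> z$2 < t (j+1)}"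
definition UH :: "nat \<Rightarrow> (real^2) set" where "UH j = {z. z$2 = t (j+2) \<and> t j < z$1 \<and> z$1 < t (j+1)}"
definition UV :: "nat \<Rightarrow> (real^2) set" where "UV j = {z. z$1 = t j \<and> t (j+1) < z$2 \<and> z$2 < t (j+2)}"
definition cLH :: "nat \<Rightarrow> (real^2) set" where "cLH j = {z. z$2 = t j \<and> t (j+1) \<le> z$1 \<and> z$1 \<le> t (j+2)}"
definition cLV :: "nat \<Rightarrow> (real^2) set" where "cLV j = {z. z$1 = t (j+2) \<and> t j \<le> z$2 \<and> z$2 \<le> t (j+1)}"

lemma UH_sw: "UH j = sw ` LV j" by (auto simp: UH_def LV_def sw_in_image)
lemma UV_sw: "UV j = sw ` LH j" by (auto simp: UV_def LH_def sw_in_image)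

lemma LV_0: "LV 0 = {}" by (auto simp: LV_def)

lemma t2: "t 2 = 1" by simp
lemma t2': "t (Suc (Suc 0)) = 1" using tt_2[of lam] by (simp add: numeral_2_eq_2)
lemma t_num: "t (Suc 0) = 0" "t 0 = 0" by simp_all

lemma Ledge_open:
  "open_segment (Lvert lam k) (Lvert lam (Suc k)) =
     (if k = 0 then LH 0 else if odd k then LH (k div 2 + 1) else LV (k div 2))"
proof -
  consider "k = 0" | n where "k = Suc (2*n)" | n where "k = 2*n+2"
    using parity_cases3[of k] by blast
  then show ?thesis
  proof cases
    case 1
    have v1: "Lvert lam 1 = pt 1 0" using Lvert_odd[of lam 0] t2' by simp
    show ?thesis using 1 v1 by (simp add: Lvert_0 open_seg_h LH_def t2')
  next
    case (2 n)
    have e: "Suc (Suc (2*n)) = 2*n+2" by simp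
    have "t (n+2) < t (n+3)" by (rule t_strict) auto
    then show ?thesis using 2
      by (simp only: e Lvert_odd Lvert_even) (simp add: open_seg_h LH_def algebra_simps)
  next
    case (3 n)
    have e: "Suc (2*n+2) = Suc (2*(n+1))" by simp
    have "t (n+1) < t (n+2)" by (rule t_strict) auto
    then show ?thesis using 3
      by (simp only: e Lvert_odd Lvert_even) (simp add: open_seg_v LV_def algebra_simps)
  qed
qed

lemma Ledge_closed:
  "closed_segment (Lvert lam k) (Lvert lam (Suc k)) =
     (if k = 0 then cLH 0 else if odd k then cLH (k div 2 + 1) else cLV (k div 2))"
proof -
  consider "k = 0" | n where "k = Suc (2*n)" | n where "k = 2*n+2"
    using parity_cases3[of k] by blast
  then show ?thesis
  proof cases
    case 1
    have v1: "Lvert lam 1 = pt 1 0" using Lvert_odd[of lam 0] t2' by simp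
    show ?thesis using 1 v1 by (simp add: Lvert_0 closed_seg_h cLH_def t2')
  next
    case (2 n)
    have e: "Suc (Suc (2*n)) = 2*n+2" by simp
    have "t (n+2) < t (n+3)" by (rule t_strict) auto
    then show ?thesis using 2
      by (simp only: e Lvert_odd Lvert_even) (simp add: closed_seg_h cLH_def algebra_simps)
  next
    case (3 n)
    have e: "Suc (2*n+2) = Suc (2*(n+1))" by simp
    have "t (n+1) < t (n+2)" by (rule t_strict) auto
    then show ?thesis using 3
      by (simp only: e Lvert_odd Lvert_even) (simp add: closed_seg_v cLV_def algebra_simps)
  qed
qed

lemma Lopen_union: "(\<Union>k. open_segment (Lvert lam k) (Lvert lam (Suc k))) = (\<Union>j. LH j \<union> LV j)"
proof (intro set_eqI iffI)
  fix z assume "z \<in> (\<Union>k. open_segment (Lvert lam k) (Lvert lam (Suc k)))"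
  then obtain k where "z \<in> open_segment (Lvert lam k) (Lvert lam (Suc k))" by blast
  moreover have "open_segment (Lvert lam k) (Lvert lam (Suc k)) \<in> {LH 0, LH (k div 2 + 1), LV (k div 2)}"
    by (simp add: Ledge_open)
  ultimately show "z \<in> (\<Union>j. LH j \<union> LV j)" by blast
next
  fix z assume "z \<in> (\<Union>j. LH j \<union> LV j)"
  then obtain j where j: "z \<in> LH j \<or> z \<in> LV j" by auto
  show "z \<in> (\<Union>k. open_segment (Lvert lam k) (Lvert lam (Suc k)))"
  proof (cases "z \<in> LH j")
    case True
    show ?thesis
    proof (cases j)
      case 0
      have "open_segment (Lvert lam 0) (Lvert lam (Suc 0)) = LH j" using Ledge_open[of 0] 0 by simp
      then show ?thesis using True by blast
    next
      case (Suc n)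
      have "open_segment (Lvert lam (Suc (2*n))) (Lvert lam (Suc (Suc (2*n)))) = LH j"
        using Ledge_open[of "Suc (2*n)"] Suc by simp
      then show ?thesis using True by blast
    qed
  next
    case False
    then have "z \<in> LV j" using j by auto
    then obtain n where "j = Suc n" using LV_0 by (cases j) auto
    moreover have "open_segment (Lvert lam (2*n+2)) (Lvert lam (Suc (2*n+2))) = LV (Suc n)"
        using Ledge_open[of "2*n+2"] by simp
    ultimately show ?thesis using \<open>z \<in> LV j\<close> by blast
  qed
qed

lemma cLV_0: "cLV 0 \<subseteq> cLH 0"
  using t_nonneg[of "Suc (Suc 0)"] by (auto simp: cLV_def cLH_def)

lemma Lpath_eq: "Lpath lam = (\<Union>j. cLH j \<union> cLV j)"
proof (intro set_eqI iffI)
  fix z assume "z \<in> Lpath lam"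
  then obtain k where "z \<in> closed_segment (Lvert lam k) (Lvert lam (Suc k))" unfolding Lpath_def by blast
  moreover have "closed_segment (Lvert lam k) (Lvert lam (Suc k)) \<in> {cLH 0, cLH (k div 2 + 1), cLV (k div 2)}"
    by (simp add: Ledge_closed)
  ultimately show "z \<in> (\<Union>j. cLH j \<union> cLV j)" by blast
next
  fix z assume "z \<in> (\<Union>j. cLH j \<union> cLV j)"
  then obtain j where j: "z \<in> cLH j \<or> z \<in> cLV j" by auto
  show "z \<in> Lpath lam" unfolding Lpath_def
  proof (cases "z \<in> cLH j")
    case True
    show "z \<in> (\<Union>k. closed_segment (Lvert lam k) (Lvert lam (Suc k)))"
    proof (cases j)
      case 0
      have "closed_segment (Lvert lam 0) (Lvert lam (Suc 0)) = cLH j" using Ledge_closed[of 0] 0 by simp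
      then show ?thesis using True by blast
    next
      case (Suc n)
      have "closed_segment (Lvert lam (Suc (2*n))) (Lvert lam (Suc (Suc (2*n)))) = cLH j"
        using Ledge_closed[of "Suc (2*n)"] Suc by simp
      then show ?thesis using True by blast
    qed
  next
    case False
    then have "z \<in> cLV j" using j by auto
    show "z \<in> (\<Union>k. closed_segment (Lvert lam k) (Lvert lam (Suc k)))"
    proof (cases j)
      case 0
      have "closed_segment (Lvert lam 0) (Lvert lam (Suc 0)) = cLH 0" using Ledge_closed[of 0] by simp
      then show ?thesis using \<open>z \<in> cLV j\<close> cLV_0 0 by blast
    next
      case (Suc n)
      have "closed_segment (Lvert lam (2*n+2)) (Lvert lam (Suc (2*n+2))) = cLV j"
        using Ledge_closed[of "2*n+2"] Suc by simp
      then show ?thesis using \<open>z \<in> cLV j\<close> by blast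
    qed
  qed
qed

lemma Upath_eq: "Upath lam = sw ` Lpath lam"
  unfolding Upath_def Lpath_def Uvert_sw image_UN
  using closed_segment_linear_image[OF sw_linear] by simp

lemma Uopen_union: "(\<Union>k. open_segment (Uvert lam k) (Uvert lam (Suc k))) = sw ` (\<Union>j. LH j \<union> LV j)"
  unfolding Lopen_union[symmetric] Uvert_sw image_UN
  using open_segment_linear_image[OF sw_linear sw_inj] by simp

end


lemma Uvert_0: "Uvert lam 0 = pt 0 0" by (simp add: Uvert_sw Lvert_0)
lemma Uvert_odd: "Uvert lam (Suc (2*m)) = pt (tt lam (m+1)) (tt lam (m+2))"
  by (simp add: Uvert_sw Lvert_odd)
lemma Lvert_even': "Lvert lam (Suc (Suc (2*n))) = pt (tt lam (n+3)) (tt lam (n+1))"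
  using Lvert_even[of lam n] by simp
lemma Uvert_even: "Uvert lam (Suc (Suc (2*m))) = pt (tt lam (m+1)) (tt lam (m+3))"
  by (simp only: Uvert_sw Lvert_even') simp

lemma translate_closed_segment: "(\<lambda>x. x + tau) ` closed_segment a b = closed_segment (a + tau) (b + tau)"
  using closed_segment_translation[of tau a b] by (simp add: add.commute)

lemma pair_match:
  fixes a b c d tau :: "real^2"
  assumes "{a + tau, b + tau} = {c, d}" "a \<noteq> b"
    and "\<forall>i. 0 \<le> (b - a) $ i" and "\<forall>i. 0 \<le> (d - c) $ i"
  shows "a + tau = c \<and> b + tau = d"
proof (rule ccontr)
  assume "\<not> ?thesis"
  with assms(1) have "a + tau = d" "b + tau = c" by (auto simp: doubleton_eq_iff)
  then have "d - c = a - b" by (metis add_diff_cancel_right diff_diff_eq2 diff_add_cancel)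
  then have "\<forall>i. (b - a) $ i = 0" using assms(3,4)
    by (metis add.inverse_neutral minus_diff_eq order_antisym_conv vector_uminus_component neg_0_le_iff_le)
  then have "b - a = 0" by (simp add: vec_eq_iff)
  then show False using assms(2) by simp
qed

context lad begin

lemma t_diff: "1 \<le> a \<Longrightarrow> t (Suc a) - t a = lam ^ (a - 1)"
  using tt_Suc[of a lam] by simp

lemma t_diff_pos: "1 \<le> a \<Longrightarrow> 0 < t (Suc a) - t a"
  using t_Suc_gt by simp

lemma t_diff_inj:
  assumes "1 \<le> a" "1 \<le> b" "t (Suc a) - t a = t (Suc b) - t b"
  shows "a = b"
proof -
  have "lam ^ (a - 1) = lam ^ (b - 1)" using assms t_diff by simp
  then have "a - 1 = b - 1" using lam_pos lam_lt1
    by (metis power_decreasing_iff order_antisym order_refl)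
  then show ?thesis using assms by simp
qed

definition tauH :: "nat \<Rightarrow> real^2" where "tauH j = pt 0 (t (j+3) - t j)"
definition tauV :: "nat \<Rightarrow> real^2" where "tauV j = pt (t (j-1) - t (j+2)) 0"

definition glueR :: "real^2 \<Rightarrow> real^2 \<Rightarrow> bool" where
  "glueR p q \<longleftrightarrow> (\<exists>j. p \<in> LH j \<and> q = p + tauH j) \<or> (\<exists>j. 1 \<le> j \<and> p \<in> LV j \<and> q = p + tauV j)"

lemma t3: "t (Suc (Suc (Suc 0))) = 1 + lam"
  using tt_Suc[of 2 lam] t2' by (simp add: numeral_2_eq_2)

lemma parity3E:
  obtains "k = 0" | n where "k = Suc (2*n)" | n where "k = Suc (Suc (2*n))"
  using parity_cases3[of k] by auto

lemma glue_core:
  assumes "{pt a1 a2 + tau, pt b1 b2 + tau} = {pt u1 u2, pt v1 v2}" "a1 \<le> b1" "a2 \<le> b2"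
    "pt a1 a2 \<noteq> pt b1 b2" "u1 \<le> v1" "u2 \<le> v2"
  shows "tau = pt (u1 - a1) (u2 - a2) \<and> b1 - a1 = v1 - u1 \<and> b2 - a2 = v2 - u2"
proof -
  have "pt a1 a2 + tau = pt u1 u2 \<and> pt b1 b2 + tau = pt v1 v2"
    by (rule pair_match[OF assms(1) assms(4)]) (use assms in \<open>simp_all add: forall_2\<close>)
  moreover obtain ta tb where "tau = pt ta tb" using pt_expand by blast
  ultimately show ?thesis by simp
qed

lemma Uvert_cases:
  obtains "j = 0" "Uvert lam j = pt 0 0" "Uvert lam (Suc j) = pt 0 1"
  | m where "j = Suc (2*m)" "Uvert lam j = pt (t (m+1)) (t (m+2))" "Uvert lam (Suc j) = pt (t (m+1)) (t (m+3))"
  | m where "j = Suc (Suc (2*m))" "Uvert lam j = pt (t (m+1)) (t (m+3))" "Uvert lam (Suc j) = pt (t (m+2)) (t (m+3))"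
proof (cases j rule: parity3E)
  case 1 then show ?thesis using that(1) Uvert_odd[of lam 0] t2' by (simp add: Uvert_0)
next
  case (2 m) then show ?thesis using that(2)[of m] Uvert_odd[of lam m] Uvert_even[of lam m] by simp
next
  case (3 m)
  have "Suc j = Suc (2*(m+1))" using 3 by simp
  then show ?thesis using 3 that(3)[of m] Uvert_odd[of lam "m+1"] Uvert_even[of lam m] by simp
qed

lemma glue_imp:
  assumes "ladder_glue lam p q"
  shows "glueR p q"
proof -
  obtain k j tau where p: "p \<in> open_segment (Lvert lam k) (Lvert lam (Suc k))"
    and e: "{Lvert lam k + tau, Lvert lam (Suc k) + tau} = {Uvert lam j, Uvert lam (Suc j)}"
    and q: "q = p + tau"
    using assms unfolding ladder_glue_def translate_closed_segment closed_segment_eq by blast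
  have dpos: "t a \<le> t (Suc a)" for a using t_Suc_ge[of a] by simp
  have t1: "t (Suc 0) = 0" "t (Suc (Suc 0)) = 1" using t2' by simp_all
  have d01: "t 0 \<le> t (Suc 0)" "t (Suc 0) \<le> t (Suc (Suc 0))" "0 \<le> (1::real)" by (simp_all add: t1)
  show ?thesis
  proof (cases k rule: parity3E)
    case 1
    have pLH: "p \<in> LH 0" using p 1 Ledge_open[of 0] by simp
    have L: "Lvert lam k = pt 0 0" "Lvert lam (Suc k) = pt 1 0"
      using 1 Lvert_0 Lvert_odd[of lam 0] t1 by simp_all
    show ?thesis
    proof (cases j rule: Uvert_cases)
      case 1 then show ?thesis using glue_core[of 0 0 tau 1 0 0 0 0 1] e L by simp
    next
      case (2 m) then show ?thesis using glue_core[of 0 0 tau 1 0 "t (m+1)" "t (m+2)" "t (m+1)" "t (m+3)"]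
        e L dpos[of "m+2"] by simp
    next
      case (3 m)
      have "tau = pt (t (m+1)) (t (m+3)) \<and> 1 = t (m+2) - t (m+1)"
        using glue_core[of 0 0 tau 1 0 "t (m+1)" "t (m+3)" "t (m+2)" "t (m+3)"] e L 3 dpos[of "m+1"] by simp
      moreover have "m = 0"
        using calculation t_diff_inj[of "Suc m" "Suc 0"] t1 by simp
      ultimately have "tau = tauH 0" using t1 by (simp add: tauH_def)
      then show ?thesis unfolding glueR_def using q pLH by blast
    qed
  next
    case (2 n)
    have "Suc k = Suc (Suc (2*n))" using 2 by simp
    then have L: "Lvert lam k = pt (t (n+2)) (t (n+1))" "Lvert lam (Suc k) = pt (t (n+3)) (t (n+1))"
      using 2 Lvert_odd Lvert_even' by simp_all
    have lt: "t (n+2) < t (n+3)" using t_strict[of "n+2" "n+3"] by simp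
    have pLH: "p \<in> LH (n+1)" using p 2 Ledge_open[of k] by simp
    show ?thesis
    proof (cases j rule: Uvert_cases)
      case 1 then show ?thesis
        using glue_core[of "t (n+2)" "t (n+1)" tau "t (n+3)" "t (n+1)" 0 0 0 1] e L lt by simp
    next
      case (2 m) then show ?thesis
        using glue_core[of "t (n+2)" "t (n+1)" tau "t (n+3)" "t (n+1)" "t (m+1)" "t (m+2)" "t (m+1)" "t (m+3)"]
          e L lt dpos[of "m+2"] by simp
    next
      case (3 m)
      have h: "tau = pt (t (m+1) - t (n+2)) (t (m+3) - t (n+1)) \<and> t (n+3) - t (n+2) = t (m+2) - t (m+1)"
        using glue_core[of "t (n+2)" "t (n+1)" tau "t (n+3)" "t (n+1)" "t (m+1)" "t (m+3)" "t (m+2)" "t (m+3)"]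
          e L 3 lt dpos[of "m+1"] by simp
      then have "m = n + 1" using t_diff_inj[of "Suc m" "n+2"] by simp
      then have "tau = tauH (n+1)" using h by (simp add: tauH_def)
      then show ?thesis unfolding glueR_def using q pLH by blast
    qed
  next
    case (3 n)
    have "Suc k = Suc (2*(n+1))" using 3 by simp
    then have L: "Lvert lam k = pt (t (n+3)) (t (n+1))" "Lvert lam (Suc k) = pt (t (n+3)) (t (n+2))"
      using 3 Lvert_odd[of lam "n+1"] Lvert_even' by simp_all
    have lt: "t (n+1) < t (n+2)" using t_strict[of "n+1" "n+2"] by simp
    have pLV: "p \<in> LV (n+1)" using p 3 Ledge_open[of k] by simp
    show ?thesis
    proof (cases j rule: Uvert_cases)
      case 1
      have h: "tau = pt (0 - t (n+3)) (0 - t (n+1)) \<and> t (n+2) - t (n+1) = 1"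
        using glue_core[of "t (n+3)" "t (n+1)" tau "t (n+3)" "t (n+2)" 0 0 0 1] e L 1 lt by simp
      then have "n = 0" using t_diff_inj[of "n+1" "Suc 0"] t1 by simp
      then have "tau = tauV (n+1)" using h by (simp add: tauV_def)
      then show ?thesis unfolding glueR_def using q pLV by auto
    next
      case (2 m)
      have h: "tau = pt (t (m+1) - t (n+3)) (t (m+2) - t (n+1)) \<and> t (n+2) - t (n+1) = t (m+3) - t (m+2)"
        using glue_core[of "t (n+3)" "t (n+1)" tau "t (n+3)" "t (n+2)" "t (m+1)" "t (m+2)" "t (m+1)" "t (m+3)"]
          e L 2 lt dpos[of "m+2"] by simp
      then have mn: "n = m + 1" using t_diff_inj[of "n+1" "m+2"] by simp
      then have "tau = tauV (n+1)" using h by (simp add: tauV_def)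
      then show ?thesis unfolding glueR_def using q pLV by auto
    next
      case (3 m) then show ?thesis
        using glue_core[of "t (n+3)" "t (n+1)" tau "t (n+3)" "t (n+2)" "t (m+1)" "t (m+3)" "t (m+2)" "t (m+3)"]
          e L lt dpos[of "m+1"] by simp
    qed
  qed
qed

lemma glue_intro:
  assumes "p \<in> open_segment (Lvert lam k) (Lvert lam (Suc k))"
    "Lvert lam k + tau = Uvert lam j" "Lvert lam (Suc k) + tau = Uvert lam (Suc j)"
  shows "ladder_glue lam p (p + tau)"
  unfolding ladder_glue_def translate_closed_segment using assms by metis

lemma glue_rev:
  assumes "glueR p q"
  shows "ladder_glue lam p q"
proof -
  have t1: "t (Suc 0) = 0" "t (Suc (Suc 0)) = 1" using t2' by simp_all
  from assms consider j where "p \<in> LH j" "q = p + tauH j" | j where "1 \<le> j" "p \<in> LV j" "q = p + tauV j"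
    unfolding glueR_def by blast
  then show ?thesis
  proof cases
    case (1 j)
    show ?thesis
    proof (cases j)
      case 0
      have "p \<in> open_segment (Lvert lam 0) (Lvert lam (Suc 0))" using 1 0 Ledge_open[of 0] by simp
      moreover have "Lvert lam 0 + tauH 0 = Uvert lam (Suc (Suc (2*0)))"
        "Lvert lam (Suc 0) + tauH 0 = Uvert lam (Suc (Suc (Suc (2*0))))"
        using Uvert_even[of lam 0] Uvert_odd[of lam 1] Lvert_odd[of lam 0] t1
        by (simp_all add: Lvert_0 tauH_def numeral_3_eq_3)
      ultimately show ?thesis using glue_intro 1 0 by (metis numeral_2_eq_2)
    next
      case (Suc n)
      have "p \<in> open_segment (Lvert lam (Suc (2*n))) (Lvert lam (Suc (Suc (2*n))))"
        using 1 Suc Ledge_open[of "Suc (2*n)"] by simp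
      moreover have "Lvert lam (Suc (2*n)) + tauH j = Uvert lam (Suc (Suc (2*(n+1))))"
        "Lvert lam (Suc (Suc (2*n))) + tauH j = Uvert lam (Suc (Suc (Suc (2*(n+1)))))"
        using Uvert_even[of lam "n+1"] Uvert_odd[of lam "n+2"] Lvert_odd[of lam n] Lvert_even'[of lam n] Suc
        by (simp_all add: tauH_def)
      ultimately show ?thesis using glue_intro 1 by metis
    qed
  next
    case (2 j)
    then obtain n where n: "j = Suc n" by (cases j) auto
    show ?thesis
    proof (cases n)
      case 0
      have "p \<in> open_segment (Lvert lam (Suc (Suc (2*0)))) (Lvert lam (Suc (Suc (Suc (2*0)))))"
        using 2 n 0 Ledge_open[of 2] by (simp add: numeral_2_eq_2)
      moreover have "Lvert lam (Suc (Suc (2*0))) + tauV j = Uvert lam 0"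
        "Lvert lam (Suc (Suc (Suc (2*0)))) + tauV j = Uvert lam (Suc 0)"
        using Uvert_odd[of lam 0] Lvert_even'[of lam 0] Lvert_odd[of lam 1] n 0 t1
        by (simp_all add: tauV_def Uvert_0 numeral_3_eq_3)
      ultimately show ?thesis using glue_intro 2 by metis
    next
      case (Suc m)
      have "p \<in> open_segment (Lvert lam (Suc (Suc (2*n)))) (Lvert lam (Suc (Suc (Suc (2*n)))))"
        using 2 n Ledge_open[of "Suc (Suc (2*n))"] by simp
      moreover have "Lvert lam (Suc (Suc (2*n))) + tauV j = Uvert lam (Suc (2*m))"
        "Lvert lam (Suc (Suc (Suc (2*n)))) + tauV j = Uvert lam (Suc (Suc (2*m)))"
        using Uvert_odd[of lam m] Uvert_even[of lam m] Lvert_even'[of lam n] Lvert_odd[of lam "n+1"] n Suc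
        by (simp_all add: tauV_def)
      ultimately show ?thesis using glue_intro 2 by metis
    qed
  qed
qed

lemma glue_iff: "ladder_glue lam p q \<longleftrightarrow> glueR p q"
  using glue_imp glue_rev by blast

end


lemma mem_box2: "z \<in> box (pt a b) (pt c d) \<longleftrightarrow> a < z$1 \<and> z$1 < c \<and> b < z$2 \<and> z$2 < d"
  by (simp add: mem_box_cart forall_2)
lemma mem_cbox2: "z \<in> cbox (pt a b) (pt c d) \<longleftrightarrow> a \<le> z$1 \<and> z$1 \<le> c \<and> b \<le> z$2 \<and> z$2 \<le> d"
  by (simp add: mem_box_cart forall_2)

context lad begin

definition Sq :: "nat \<Rightarrow> (real^2) set" where "Sq j = box (pt (t j) (t j)) (pt (t (j+2)) (t (j+2)))"
definition cSq :: "nat \<Rightarrow> (real^2) set" where "cSq j = cbox (pt (t j) (t j)) (pt (t (j+2)) (t (j+2)))"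
definition Dreg where "Dreg = (\<Union>j. Sq j)"
definition K0 where "K0 = (\<Union>j. cSq j)"
definition Kc where "Kc = insert (pt Sl Sl) K0"
definition BB where "BB = cbox (pt 0 0) (pt Sl Sl)"
definition CC where "CC = closure (Lpath lam \<union> Upath lam)"

lemma in_Sq: "z \<in> Sq j \<longleftrightarrow> t j < z$1 \<and> z$1 < t (j+2) \<and> t j < z$2 \<and> z$2 < t (j+2)"
  by (simp add: Sq_def mem_box2)
lemma in_cSq: "z \<in> cSq j \<longleftrightarrow> t j \<le> z$1 \<and> z$1 \<le> t (j+2) \<and> t j \<le> z$2 \<and> z$2 \<le> t (j+2)"
  by (simp add: cSq_def mem_cbox2)
lemma in_BB: "z \<in> BB \<longleftrightarrow> 0 \<le> z$1 \<and> z$1 \<le> Sl \<and> 0 \<le> z$2 \<and> z$2 \<le> Sl"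
  by (simp add: BB_def mem_cbox2)

lemma open_Dreg: "open Dreg" unfolding Dreg_def Sq_def by auto

lemma Dreg_sub_BB: "Dreg \<subseteq> BB"
proof
  fix z assume "z \<in> Dreg"
  then obtain j where "z \<in> Sq j" by (auto simp: Dreg_def)
  then show "z \<in> BB" using t_nonneg[of j] t_lt_Sl[of "j+2"] by (auto simp: in_Sq in_BB)
qed

lemma K0_sub_BB: "K0 \<subseteq> BB"
proof
  fix z assume "z \<in> K0"
  then obtain j where "z \<in> cSq j" by (auto simp: K0_def)
  then show "z \<in> BB" using t_nonneg[of j] t_lt_Sl[of "j+2"] by (auto simp: in_cSq in_BB)
qed

lemma Kc_sub_BB: "Kc \<subseteq> BB"
  using K0_sub_BB Sl_pos by (auto simp: Kc_def in_BB)

lemma bounded_Dreg: "bounded Dreg"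
  using Dreg_sub_BB bounded_cbox bounded_subset BB_def by metis

lemma sw_Sq: "sw z \<in> Sq j \<longleftrightarrow> z \<in> Sq j" by (auto simp: in_Sq)
lemma sw_cSq: "sw z \<in> cSq j \<longleftrightarrow> z \<in> cSq j" by (auto simp: in_cSq)
lemma sw_Dreg: "sw z \<in> Dreg \<longleftrightarrow> z \<in> Dreg" by (simp add: Dreg_def sw_Sq)
lemma sw_K0: "sw z \<in> K0 \<longleftrightarrow> z \<in> K0" by (simp add: K0_def sw_cSq)
lemma sw_Kc: "sw z \<in> Kc \<longleftrightarrow> z \<in> Kc"
  by (auto simp: Kc_def sw_K0) (metis sw_pt sw_sw)
lemma sw_BB: "sw z \<in> BB \<longleftrightarrow> z \<in> BB" by (auto simp: in_BB)

lemma Lpath_sub_K0: "Lpath lam \<subseteq> K0"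
proof
  fix z assume "z \<in> Lpath lam"
  then obtain j where "z \<in> cLH j \<or> z \<in> cLV j" by (auto simp: Lpath_eq)
  then have "z \<in> cSq j"
    using t_mono[of j "j+1"] t_mono[of "j+1" "j+2"] t_mono[of j "j+2"]
    by (auto simp: cLH_def cLV_def in_cSq)
  then show "z \<in> K0" by (auto simp: K0_def)
qed

lemma Upath_sub_K0: "Upath lam \<subseteq> K0"
  using Lpath_sub_K0 by (auto simp: Upath_eq sw_K0)

lemma Lpath_Dreg: "z \<in> Lpath lam \<Longrightarrow> z \<notin> Dreg"
proof
  assume "z \<in> Lpath lam" "z \<in> Dreg"
  then obtain j i where j: "z \<in> cLH j \<or> z \<in> cLV j" and i: "z \<in> Sq i" by (auto simp: Lpath_eq Dreg_def)
  show False
  proof (cases "z \<in> cLH j")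
    case True
    then have "t i < t j" using i by (auto simp: cLH_def in_Sq)
    then have "i + 2 \<le> j + 1" using t_less_imp by fastforce
    then have "t (i+2) \<le> t (j+1)" by (rule t_mono)
    then show False using True i by (auto simp: cLH_def in_Sq)
  next
    case False
    then have h: "z \<in> cLV j" using j by auto
    then have "t i < t (j+1)" using i by (auto simp: cLV_def in_Sq)
    then have "i + 2 \<le> j + 2" using t_less_imp by fastforce
    then have "t (i+2) \<le> t (j+2)" by (rule t_mono)
    then show False using h i by (auto simp: cLV_def in_Sq)
  qed
qed

lemma Upath_Dreg: "z \<in> Upath lam \<Longrightarrow> z \<notin> Dreg"
  using Lpath_Dreg by (auto simp: Upath_eq sw_Dreg)

lemma Dreg_CC: "Dreg \<inter> CC = {}"
  unfolding CC_def using open_Int_closure_eq_empty[OF open_Dreg] Lpath_Dreg Upath_Dreg by blast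

lemma K0_minus_Dreg_L:
  assumes z: "z \<in> cSq j" "z \<notin> Dreg" "z$2 \<le> z$1"
  shows "z \<in> Lpath lam"
proof -
  have nSq: "z \<notin> Sq i" for i using z(2) by (auto simp: Dreg_def)
  have zz: "t j \<le> z$1" "z$1 \<le> t (j+2)" "t j \<le> z$2" "z$2 \<le> t (j+2)" using z(1) by (auto simp: in_cSq)
  have caseA: "z \<in> Lpath lam" if a: "z$2 = t j"
  proof (cases "j \<le> 1")
    case True
    then have tj: "t j = 0" by (cases j) auto
    show ?thesis
    proof (cases "z$1 \<le> 1")
      case True
      then have "z \<in> cLH 0" using a tj zz by (auto simp: cLH_def t2')
      then show ?thesis by (auto simp: Lpath_eq)
    next
      case False
      then have "j = 1" using zz \<open>j \<le> 1\<close> t2' by (cases j) auto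
      then have "z \<in> cLH 1" using a tj zz False by (auto simp: cLH_def t2')
      then show ?thesis by (auto simp: Lpath_eq)
    qed
  next
    case False
    then obtain i where i: "j = Suc i" "1 \<le> i" by (cases j) auto
    have "t i < t j" "t j < t (i+2)" using i t_strict by auto
    then have "\<not> (t i < z$1 \<and> z$1 < t (i+2))" using nSq[of i] a by (auto simp: in_Sq)
    moreover have "t i < z$1" using zz \<open>t i < t j\<close> by linarith
    ultimately have "t (j+1) \<le> z$1" using i by auto
    then have "z \<in> cLH j" using a zz by (auto simp: cLH_def)
    then show ?thesis by (auto simp: Lpath_eq)
  qed
  have caseB: "z \<in> Lpath lam" if b: "z$1 = t (j+2)"
  proof -
    have "t (j+1) < t (j+2)" "t (j+2) < t (j+3)" using t_strict by auto
    then have "\<not> (t (j+1) < z$2 \<and> z$2 < t (j+3))" using nSq[of "j+1"] b by (auto simp: in_Sq)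
    moreover have "z$2 < t (j+3)" using zz \<open>t (j+2) < t (j+3)\<close> by linarith
    ultimately have "z$2 \<le> t (j+1)" by auto
    then have "z \<in> cLV j" using b zz by (auto simp: cLV_def)
    then show ?thesis by (auto simp: Lpath_eq)
  qed
  have "z$1 = t j \<or> z$1 = t (j+2) \<or> z$2 = t j \<or> z$2 = t (j+2)"
    using nSq[of j] zz by (auto simp: in_Sq)
  then show ?thesis
  proof (elim disjE)
    assume "z$1 = t j" then show ?thesis using caseA zz z(3) by simp
  next
    assume "z$1 = t (j+2)" then show ?thesis using caseB by simp
  next
    assume "z$2 = t j" then show ?thesis using caseA by simp
  next
    assume "z$2 = t (j+2)" then show ?thesis using caseB zz z(3) by simp
  qed
qed

lemma K0_minus_Dreg: "z \<in> K0 \<Longrightarrow> z \<notin> Dreg \<Longrightarrow> z \<in> Lpath lam \<union> Upath lam"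
proof -
  assume z: "z \<in> K0" "z \<notin> Dreg"
  then obtain j where j: "z \<in> cSq j" by (auto simp: K0_def)
  show ?thesis
  proof (cases "z$2 \<le> z$1")
    case True then show ?thesis using K0_minus_Dreg_L j z by blast
  next
    case False
    then have "sw z \<in> Lpath lam" using K0_minus_Dreg_L[of "sw z" j] j z by (simp add: sw_cSq sw_Dreg)
    then show ?thesis by (auto simp: Upath_eq sw_in_image)
  qed
qed

lemma Sl_in_CC: "pt Sl Sl \<in> CC"
proof -
  have "(\<lambda>n. Lvert lam (Suc (2*n))) \<longlonglongrightarrow> pt Sl Sl"
  proof -
    have a: "(\<lambda>n. t (n+2)) \<longlonglongrightarrow> Sl" "(\<lambda>n. t (n+1)) \<longlonglongrightarrow> Sl"
      using LIMSEQ_ignore_initial_segment[OF t_lim, of 2] LIMSEQ_ignore_initial_segment[OF t_lim, of 1]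
      by auto
    have "(\<lambda>n. pt (t (n+2)) (t (n+1))) \<longlonglongrightarrow> pt Sl Sl"
    proof (rule vec_tendstoI)
      fix i :: 2
      consider "i = 1" | "i = 2" using exhaust_2 by blast
      then show "(\<lambda>n. pt (t (n+2)) (t (n+1)) $ i) \<longlonglongrightarrow> pt Sl Sl $ i" using a by cases auto
    qed
    then show ?thesis using Lvert_odd by simp
  qed
  moreover have "Lvert lam (Suc (2*n)) \<in> Lpath lam \<union> Upath lam" for n
    unfolding Lpath_def by (auto intro!: exI[of _ "Suc (2*n)"])
  ultimately show ?thesis unfolding CC_def by (meson closure_sequential)
qed

lemma closed_cSq: "closed (cSq j)" unfolding cSq_def by auto

lemma Dreg_sub_K0: "Dreg \<subseteq> K0"
  unfolding Dreg_def K0_def Sq_def cSq_def using box_subset_cbox by blast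

lemma closed_Kc: "closed Kc"
proof -
  have "open (-Kc)"
  proof (rule open_subopen[THEN iffD2], rule ballI)
    fix z assume z: "z \<in> -Kc"
    show "\<exists>T. open T \<and> z \<in> T \<and> T \<subseteq> -Kc"
    proof (cases "z \<in> BB")
      case False
      moreover have "open (-BB)" unfolding BB_def by (rule open_Compl) (rule closed_cbox)
      ultimately show ?thesis using Kc_sub_BB by blast
    next
      case True
      have "z \<noteq> pt Sl Sl" using z by (auto simp: Kc_def)
      moreover have "z$1 \<le> Sl" "z$2 \<le> Sl" using True by (auto simp: in_BB)
      ultimately have "min (z$1) (z$2) < Sl" by (cases "z$1 \<le> z$2") (auto simp: min_def pt_eq_iff2)
      then have "eventually (\<lambda>n. min (z$1) (z$2) < t n) sequentially"
        using order_tendstoD(1)[OF t_lim] by blast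
      then obtain N where N: "min (z$1) (z$2) < t N" by (auto simp: eventually_sequentially)
      define F where "F = (\<Union>i<N. cSq i)"
      define G where "G = {v::real^2. v$1 \<ge> t N} \<inter> {v. v$2 \<ge> t N}"
      have cF: "closed F" unfolding F_def by (intro closed_UN) (simp_all add: closed_cSq)
      have cG: "closed G" unfolding G_def
        using closed_halfspace_component_ge_cart[where i=1 and a="t N"] closed_halfspace_component_ge_cart[where i=2 and a="t N"]
        by (metis closed_Int)
      have "Kc \<subseteq> F \<union> G"
      proof
        fix v assume "v \<in> Kc"
        then consider "v = pt Sl Sl" | i where "v \<in> cSq i" by (auto simp: Kc_def K0_def)
        then show "v \<in> F \<union> G"
        proof cases
          case 1 then show ?thesis using t_lt_Sl[of N] by (auto simp: G_def less_imp_le)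
        next
          case (2 i)
          show ?thesis
          proof (cases "i < N")
            case True then show ?thesis using 2 by (auto simp: F_def)
          next
            case False
            then have "t N \<le> t i" by (simp add: t_mono)
            then show ?thesis using 2 by (auto simp: G_def in_cSq)
          qed
        qed
      qed
      moreover have "z \<notin> F" using z by (auto simp: F_def Kc_def K0_def)
      moreover have "z \<notin> G" using N by (auto simp: G_def)
      ultimately show ?thesis using cF cG by (intro exI[of _ "-(F \<union> G)"]) auto
    qed
  qed
  then show ?thesis by (simp add: closed_open)
qed

lemma CC_sub_Kc: "CC \<subseteq> Kc"
  unfolding CC_def using Lpath_sub_K0 Upath_sub_K0 closed_Kc
  by (intro closure_minimal) (auto simp: Kc_def)

lemma Kc_minus_Dreg: "z \<in> Kc \<Longrightarrow> z \<notin> Dreg \<Longrightarrow> z \<in> CC"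
  using Sl_in_CC K0_minus_Dreg closure_subset unfolding Kc_def CC_def by blast

lemma frontier_Dreg: "frontier Dreg \<subseteq> CC"
proof
  fix z assume "z \<in> frontier Dreg"
  then have "z \<in> closure Dreg" "z \<notin> Dreg"
    using open_Dreg by (auto simp: frontier_def interior_open)
  moreover have "closure Dreg \<subseteq> Kc"
    using Dreg_sub_K0 closed_Kc by (intro closure_minimal) (auto simp: Kc_def)
  ultimately show "z \<in> CC" using Kc_minus_Dreg by blast
qed

lemma ray_L:
  assumes "z \<in> BB" "z \<notin> Kc" "z$2 \<le> z$1"
  shows "\<exists>S. connected S \<and> z \<in> S \<and> S \<inter> Kc = {} \<and> (\<exists>w\<in>S. w \<notin> BB)"
proof -
  have z0: "0 \<le> z$2" using assms by (auto simp: in_BB)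
  define S where "S = closed_segment (pt (z$1) (-1)) (pt (z$1) (z$2))"
  have S: "S = {v. v$1 = z$1 \<and> -1 \<le> v$2 \<and> v$2 \<le> z$2}"
    unfolding S_def using z0 by (simp add: closed_seg_v)
  have "S \<inter> Kc = {}"
  proof (rule ccontr)
    assume "S \<inter> Kc \<noteq> {}"
    then obtain v where v: "v \<in> S" "v \<in> Kc" by blast
    then consider "v = pt Sl Sl" | i where "v \<in> cSq i" by (auto simp: Kc_def K0_def)
    then show False
    proof cases
      case 1
      then have "z = pt Sl Sl" using v S assms by (auto simp: in_BB pt_eq_iff2)
      then show False using assms by (simp add: Kc_def)
    next
      case (2 i)
      then have "z \<in> cSq i" using v S assms by (auto simp: in_cSq)
      then show False using assms by (auto simp: Kc_def K0_def)
    qed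
  qed
  moreover have "z \<in> S" using S z0 by simp
  moreover have "pt (z$1) (-1) \<in> S" "pt (z$1) (-1) \<notin> BB" using S z0 by (auto simp: in_BB)
  moreover have "connected S" unfolding S_def by simp
  ultimately show ?thesis by blast
qed

lemma ray:
  assumes "z \<in> BB" "z \<notin> Kc"
  shows "\<exists>S. connected S \<and> z \<in> S \<and> S \<inter> Kc = {} \<and> (\<exists>w\<in>S. w \<notin> BB)"
proof (cases "z$2 \<le> z$1")
  case True then show ?thesis using ray_L assms by blast
next
  case False
  then obtain S where S: "connected S" "sw z \<in> S" "S \<inter> Kc = {}" "\<exists>w\<in>S. w \<notin> BB"
    using ray_L[of "sw z"] assms by (auto simp: sw_BB sw_Kc)
  have "connected (sw ` S)"
    using S(1) linear_continuous_on[OF linear_conv_bounded_linear[THEN iffD1, OF sw_linear]]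
    by (metis connected_continuous_image continuous_on_subset subset_UNIV)
  moreover have "z \<in> sw ` S" using S(2) by (simp add: sw_in_image)
  moreover have "sw ` S \<inter> Kc = {}" using S(3) by (auto simp: sw_Kc)
  moreover have "\<exists>w\<in>sw ` S. w \<notin> BB" using S(4) by (auto simp: sw_BB)
  ultimately show ?thesis by blast
qed

lemma outside_CC:
  assumes "z \<notin> Dreg" "z \<notin> CC"
  shows "z \<in> outside CC"
proof -
  have zK: "z \<notin> Kc" using assms Kc_minus_Dreg by blast
  have out: "- BB \<subseteq> outside CC"
    using outside_subset_convex[of BB CC] CC_sub_Kc Kc_sub_BB unfolding BB_def by auto
  show ?thesis
  proof (cases "z \<in> BB")
    case False then show ?thesis using out by blast
  next
    case True
    then obtain S w where S: "connected S" "z \<in> S" "S \<inter> Kc = {}" "w \<in> S" "w \<notin> BB"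
      using ray zK by blast
    have "S \<subseteq> -CC" using S(3) CC_sub_Kc by blast
    then have "connected_component (- CC) w z" using S by (intro connected_componentI) auto
    moreover have "w \<in> outside CC" using out S(5) by blast
    ultimately show ?thesis by (rule outside_same_component)
  qed
qed

lemma inside_CC: "inside CC = Dreg"
proof
  show "inside CC \<subseteq> Dreg"
  proof
    fix z assume z: "z \<in> inside CC"
    then have "z \<notin> CC" "z \<notin> outside CC" using inside_Int_outside inside_no_overlap by blast+
    then show "z \<in> Dreg" using outside_CC by blast
  qed
next
  have "Dreg \<subseteq> inside (frontier Dreg)"
    using interior_inside_frontier[OF bounded_Dreg] open_Dreg by (simp add: interior_open)
  then show "Dreg \<subseteq> inside CC"
    using inside_mono[OF frontier_Dreg] Dreg_CC by blast
qed

lemma region_eq: "ladder_region lam = Dreg"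
  using inside_CC unfolding ladder_region_def CC_def by simp

end


context lad begin

definition Ledg :: "(real^2) set" where "Ledg = (\<Union>j. LH j \<union> LV j)"
definition Uedg :: "(real^2) set" where "Uedg = (\<Union>j. UH j \<union> UV j)"
definition YY :: "(real^2) set" where "YY = Dreg \<union> Ledg \<union> Uedg"

lemma Uedg_sw: "Uedg = sw ` Ledg"
  by (auto simp: Uedg_def Ledg_def UH_sw UV_sw)

lemma Y_eq: "ladder_Y lam = YY"
proof -
  have "(\<Union>k. open_segment (Uvert lam k) (Uvert lam (Suc k))) = Uedg"
    using Uopen_union Uedg_sw Ledg_def by simp
  then show ?thesis
    unfolding ladder_Y_def region_eq Lopen_union YY_def Ledg_def by simp
qed

lemma in_LH: "z \<in> LH j \<longleftrightarrow> z$2 = t j \<and> t (j+1) < z$1 \<and> z$1 < t (j+2)" by (simp add: LH_def)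
lemma in_LV: "z \<in> LV j \<longleftrightarrow> z$1 = t (j+2) \<and> t j < z$2 \<and> z$2 < t (j+1)" by (simp add: LV_def)
lemma in_UH: "z \<in> UH j \<longleftrightarrow> z$2 = t (j+2) \<and> t j < z$1 \<and> z$1 < t (j+1)" by (simp add: UH_def)
lemma in_UV: "z \<in> UV j \<longleftrightarrow> z$1 = t j \<and> t (j+1) < z$2 \<and> z$2 < t (j+2)" by (simp add: UV_def)

lemma LH_below: "z \<in> LH j \<Longrightarrow> z$2 < z$1"
  using t_mono[of j "j+1"] by (auto simp: in_LH)
lemma LV_below: "z \<in> LV j \<Longrightarrow> z$2 < z$1"
  using t_mono[of "j+1" "j+2"] by (auto simp: in_LV)
lemma Ledg_below: "z \<in> Ledg \<Longrightarrow> z$2 < z$1"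
  using LH_below LV_below by (auto simp: Ledg_def)
lemma Uedg_above: "z \<in> Uedg \<Longrightarrow> z$1 < z$2"
  using Ledg_below by (auto simp: Uedg_sw)
lemma Ledg_Uedg: "z \<in> Ledg \<Longrightarrow> z \<notin> Uedg"
  using Ledg_below Uedg_above by fastforce

lemma Ledg_Dreg: "z \<in> Ledg \<Longrightarrow> z \<notin> Dreg"
proof -
  assume "z \<in> Ledg"
  then have "z \<in> Lpath lam" unfolding Ledg_def Lpath_eq
    by (auto simp: LH_def LV_def cLH_def cLV_def)
  then show ?thesis using Lpath_Dreg by blast
qed
lemma Uedg_Dreg: "z \<in> Uedg \<Longrightarrow> z \<notin> Dreg"
  using Ledg_Dreg by (auto simp: Uedg_sw sw_Dreg)

lemma LH_uniq: "z \<in> LH j \<Longrightarrow> z \<in> LH k \<Longrightarrow> j = k"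
proof -
  assume a: "z \<in> LH j" "z \<in> LH k"
  have "t (j+1) < t (k+2)" "t (k+1) < t (j+2)" using a by (auto simp: in_LH)
  then have "j + 1 < k + 2" "k + 1 < j + 2" using t_less_imp by blast+
  then show "j = k" by simp
qed
lemma LV_uniq: "z \<in> LV j \<Longrightarrow> z \<in> LV k \<Longrightarrow> j = k"
proof -
  assume a: "z \<in> LV j" "z \<in> LV k"
  have "t j < t (k+1)" "t k < t (j+1)" using a by (auto simp: in_LV)
  then have "j < k + 1" "k < j + 1" using t_less_imp by blast+
  then show "j = k" by simp
qed
lemma LH_LV: "z \<in> LH j \<Longrightarrow> z \<notin> LV k"
proof
  assume a: "z \<in> LH j" "z \<in> LV k"
  have "t (j+1) < t (k+2)" "t (k+2) < t (j+2)" using a by (auto simp: in_LH in_LV)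
  then have "j + 1 < k + 2" "k + 2 < j + 2" using t_less_imp by blast+
  then show False by simp
qed
lemma UH_uniq: "z \<in> UH j \<Longrightarrow> z \<in> UH k \<Longrightarrow> j = k"
  using LV_uniq[of "sw z"] by (auto simp: UH_sw sw_in_image)
lemma UV_uniq: "z \<in> UV j \<Longrightarrow> z \<in> UV k \<Longrightarrow> j = k"
  using LH_uniq[of "sw z"] by (auto simp: UV_sw sw_in_image)
lemma UH_UV: "z \<in> UH j \<Longrightarrow> z \<notin> UV k"
  using LH_LV[of "sw z"] by (auto simp: UH_sw UV_sw sw_in_image)

lemma LH_tauH: "z \<in> LH j \<Longrightarrow> z + tauH j \<in> UH (j+1)"
  by (auto simp: in_LH in_UH tauH_def)
lemma LV_tauV: "1 \<le> j \<Longrightarrow> z \<in> LV j \<Longrightarrow> z + tauV j \<in> UV (j-1)"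
  by (auto simp: in_LV in_UV tauV_def)

lemma glueR_LU: "glueR p q \<Longrightarrow> p \<in> Ledg \<and> q \<in> Uedg"
  unfolding glueR_def Ledg_def Uedg_def using LH_tauH LV_tauV by blast

lemma glueR_fun: "glueR p q \<Longrightarrow> glueR p q' \<Longrightarrow> q = q'"
  unfolding glueR_def using LH_uniq LV_uniq LH_LV by metis

lemma glueR_inj: assumes "glueR p q" "glueR p' q" shows "p = p'"
proof -
  have H: "p = q - tauH j" if "p \<in> LH j" "q = p + tauH j" for p j using that by simp
  have V: "p = q - tauV j" if "q = p + tauV j" for p j using that by simp
  from assms(1) consider j where "p \<in> LH j" "q = p + tauH j" | j where "1 \<le> j" "p \<in> LV j" "q = p + tauV j"
    unfolding glueR_def by blast
  then show ?thesis
  proof cases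
    case (1 j)
    from assms(2) consider k where "p' \<in> LH k" "q = p' + tauH k" | k where "1 \<le> k" "p' \<in> LV k" "q = p' + tauV k"
      unfolding glueR_def by blast
    then show ?thesis
    proof cases
      case (1 k)
      have "q \<in> UH (j+1)" "q \<in> UH (k+1)" using 1 \<open>p \<in> LH j\<close> \<open>q = p + tauH j\<close> LH_tauH by metis+
      then have "j = k" using UH_uniq by fastforce
      then show ?thesis using 1 \<open>q = p + tauH j\<close> by simp
    next
      case (2 k)
      then show ?thesis using \<open>p \<in> LH j\<close> \<open>q = p + tauH j\<close> LH_tauH LV_tauV UH_UV by metis
    qed
  next
    case (2 j)
    from assms(2) consider k where "p' \<in> LH k" "q = p' + tauH k" | k where "1 \<le> k" "p' \<in> LV k" "q = p' + tauV k"
      unfolding glueR_def by blast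
    then show ?thesis
    proof cases
      case (1 k)
      then show ?thesis using 2 LH_tauH LV_tauV UH_UV by metis
    next
      case (2 k)
      have "j - 1 = k - 1" using 2 \<open>1 \<le> j\<close> \<open>p \<in> LV j\<close> \<open>q = p + tauV j\<close> LV_tauV UV_uniq by metis
      then have "j = k" using 2 \<open>1 \<le> j\<close> by simp
      then show ?thesis using 2 \<open>q = p + tauV j\<close> by simp
    qed
  qed
qed

abbreviation rel where "rel \<equiv> ladder_rel lam"

lemma rel_iff: "(p, q) \<in> rel \<longleftrightarrow> p \<in> YY \<and> q \<in> YY \<and> (p = q \<or> glueR p q \<or> glueR q p)"
  unfolding ladder_rel_def Y_eq glue_iff by simp

lemma rel_equiv: "equiv YY rel"
proof (rule equivI)
  show "rel \<subseteq> YY \<times> YY" using rel_iff by auto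
  show "refl_on YY rel" unfolding refl_on_def using rel_iff by auto
  show "sym rel" unfolding sym_def using rel_iff by auto
  show "trans rel" unfolding trans_def
  proof (intro allI impI)
    fix x y z assume "(x, y) \<in> rel" "(y, z) \<in> rel"
    then have Y: "x \<in> YY" "z \<in> YY" and a: "x = y \<or> glueR x y \<or> glueR y x" and b: "y = z \<or> glueR y z \<or> glueR z y"
      using rel_iff by auto
    have "x = z \<or> glueR x z \<or> glueR z x"
      using a b glueR_LU glueR_fun glueR_inj Ledg_Uedg by metis
    then show "(x, z) \<in> rel" using Y rel_iff by blast
  qed
qed

lemma rel_Dreg: "p \<in> Dreg \<Longrightarrow> (p, q) \<in> rel \<Longrightarrow> q = p"
  using rel_iff glueR_LU Ledg_Dreg Uedg_Dreg by metis

lemma sw_YY: "sw z \<in> YY \<longleftrightarrow> z \<in> YY"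
  unfolding YY_def Uedg_sw by (auto simp: sw_Dreg sw_in_image)

lemma glueR_sw: "glueR p q \<Longrightarrow> glueR (sw q) (sw p)"
proof -
  assume "glueR p q"
  then consider j where "p \<in> LH j" "q = p + tauH j" | j where "1 \<le> j" "p \<in> LV j" "q = p + tauV j"
    unfolding glueR_def by blast
  then show ?thesis
  proof cases
    case (1 j)
    have "q \<in> UH (j+1)" using 1 LH_tauH by simp
    then have "sw q \<in> LV (j+1)" by (simp add: UH_sw sw_in_image)
    moreover have "sw p = sw q + tauV (j+1)"
      using 1 by (simp add: tauH_def tauV_def sw_def vec_eq_iff forall_2)
    ultimately show ?thesis unfolding glueR_def by (metis le_add2)
  next
    case (2 j)
    then obtain k where k: "j = Suc k" by (cases j) auto
    have "q \<in> UV k" using 2 LV_tauV[of j p] k by simp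
    then have "sw q \<in> LH k" by (simp add: UV_sw sw_in_image)
    moreover have "sw p = sw q + tauH k"
      using 2 k by (simp add: tauH_def tauV_def sw_def vec_eq_iff forall_2)
    ultimately show ?thesis unfolding glueR_def by blast
  qed
qed

lemma rel_sw: "(p, q) \<in> rel \<Longrightarrow> (sw p, sw q) \<in> rel"
  using rel_iff sw_YY glueR_sw by metis

end


context lad begin

abbreviation pr where "pr \<equiv> ladder_proj lam"
abbreviation XX where "XX \<equiv> ladder_X lam"
abbreviation TT where "TT \<equiv> ladder_top lam"

lemma openin_TT: "openin TT W \<longleftrightarrow> ladder_open lam W"
  by (simp add: ladder_top_def istopology_ladder_open)

lemma pr_in_X: "y \<in> YY \<Longrightarrow> pr y \<in> XX"
  unfolding ladder_X_def ladder_proj_def Y_eq by (rule quotientI)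

lemma X_pr: "P \<in> XX \<Longrightarrow> \<exists>y\<in>YY. P = pr y"
  unfolding ladder_X_def ladder_proj_def Y_eq quotient_def by auto

lemma pr_eq: "y \<in> YY \<Longrightarrow> y' \<in> YY \<Longrightarrow> pr y = pr y' \<longleftrightarrow> (y, y') \<in> rel"
  unfolding ladder_proj_def using eq_equiv_class_iff[OF rel_equiv] by auto

lemma pr_eq_rel: "(y, y') \<in> rel \<Longrightarrow> pr y = pr y'"
  using pr_eq rel_iff by blast

lemma X_sub: "W \<subseteq> XX \<Longrightarrow> openin (top_of_set YY) {y \<in> YY. pr y \<in> W} \<Longrightarrow> openin TT W"
  by (simp add: openin_TT ladder_open_def Y_eq)

lemma openin_TT_D: "openin TT W \<Longrightarrow> W \<subseteq> XX \<and> openin (top_of_set YY) {y \<in> YY. pr y \<in> W}"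
  by (simp add: openin_TT ladder_open_def Y_eq)

lemma open_XX: "openin TT XX"
proof (rule X_sub)
  have "{y \<in> YY. pr y \<in> XX} = YY" using pr_in_X by auto
  then show "openin (top_of_set YY) {y \<in> YY. pr y \<in> XX}" by simp
qed simp

lemma topspace_TT: "topspace TT = XX"
proof
  show "topspace TT \<subseteq> XX"
    unfolding topspace_def using openin_TT_D by blast
  show "XX \<subseteq> topspace TT" using open_XX openin_subset by blast
qed

lemma cont_pr: "continuous_map (top_of_set YY) TT pr"
  unfolding continuous_map_def topspace_TT
  using pr_in_X openin_TT_D by auto

lemma cont_from_quot:
  assumes W: "openin TT W" and S: "\<And>P. P \<in> W \<Longrightarrow> \<phi> P \<in> S"
    and c: "continuous_on {y \<in> YY. pr y \<in> W} (\<phi> \<circ> pr)"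
  shows "continuous_map (subtopology TT W) (top_of_set S) \<phi>"
proof -
  have WX: "W \<subseteq> XX" using openin_TT_D[OF W] by blast
  have ts: "topspace (subtopology TT W) = W" using WX by (auto simp: topspace_TT)
  show ?thesis unfolding continuous_map_def
  proof (intro conjI allI impI)
    show "\<phi> \<in> topspace (subtopology TT W) \<rightarrow> topspace (top_of_set S)" using S ts by auto
    fix U assume "openin (top_of_set S) U"
    then obtain V where V: "open V" "U = S \<inter> V" by (auto simp: openin_open)
    have A: "{x \<in> topspace (subtopology TT W). \<phi> x \<in> U} = {P \<in> W. \<phi> P \<in> V}" using ts S V by auto
    define PW where "PW = {y \<in> YY. pr y \<in> W}"
    have PWo: "openin (top_of_set YY) PW" using openin_TT_D[OF W] unfolding PW_def by simp
    have "openin (top_of_set PW) (PW \<inter> (\<phi> \<circ> pr) -` V)"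
      using continuous_openin_preimage_gen[OF c[folded PW_def] V(1)] .
    then have "openin (top_of_set YY) (PW \<inter> (\<phi> \<circ> pr) -` V)" using PWo openin_trans by blast
    moreover have "{y \<in> YY. pr y \<in> {P \<in> W. \<phi> P \<in> V}} = PW \<inter> (\<phi> \<circ> pr) -` V" by (auto simp: PW_def)
    ultimately have "openin TT {P \<in> W. \<phi> P \<in> V}" using WX by (intro X_sub) auto
    then show "openin (subtopology TT W) {x \<in> topspace (subtopology TT W). \<phi> x \<in> U}"
      unfolding A openin_subtopology by (intro exI[of _ "{P \<in> W. \<phi> P \<in> V}"]) auto
  qed
qed

definition chart_ok :: "real^2 \<Rightarrow> real \<Rightarrow> real^2 \<Rightarrow> (real^2 \<Rightarrow> real) \<Rightarrow> bool" where
 "chart_ok p r \<tau> h \<longleftrightarrow> 0 < r \<and> continuous_on UNIV h \<and>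
   (\<forall>z\<in>ball p r. 0 < h z \<longrightarrow> z \<in> Dreg) \<and>
   (\<forall>z\<in>ball p r. h z < 0 \<longrightarrow> z + \<tau> \<in> Dreg) \<and>
   (\<forall>z\<in>ball p r. h z = 0 \<longrightarrow> (z, z + \<tau>) \<in> rel) \<and>
   (\<forall>y\<in>YY \<inter> ball p r. h y < 0 \<longrightarrow> \<tau> = 0) \<and>
   (\<forall>y\<in>YY \<inter> ball (p + \<tau>) r. 0 < h (y - \<tau>) \<longrightarrow> \<tau> = 0) \<and>
   (\<tau> \<noteq> 0 \<longrightarrow> 2*r \<le> norm \<tau>) \<and>
   (\<tau> = 0 \<longrightarrow> ball p r \<subseteq> Dreg) \<and>
   (\<forall>z\<in>ball p r. \<forall>y. \<tau> \<noteq> 0 \<longrightarrow> h z = 0 \<longrightarrow> (z, y) \<in> rel \<longrightarrow> y = z \<or> y = z + \<tau>)"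

lemma chart_ok_mono:
  assumes "chart_ok p r \<tau> h" "0 < r'" "r' \<le> r"
  shows "chart_ok p r' \<tau> h"
proof -
  have "ball p r' \<subseteq> ball p r" "ball (p+\<tau>) r' \<subseteq> ball (p+\<tau>) r" using assms(3) by auto
  then show ?thesis using assms unfolding chart_ok_def by (smt (verit, best) IntE IntI subset_iff)
qed

definition lift :: "real^2 \<Rightarrow> (real^2 \<Rightarrow> real) \<Rightarrow> real^2 \<Rightarrow> real^2" where
  "lift \<tau> h z = (if 0 \<le> h z then z else z + \<tau>)"
definition chW where "chW p r \<tau> h = (\<lambda>z. pr (lift \<tau> h z)) ` ball p r"
definition chphi where "chphi p r \<tau> h = inv_into (ball p r) (\<lambda>z. pr (lift \<tau> h z))"

context
  fixes p r \<tau> h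
  assumes ok: "chart_ok p r \<tau> h"
begin

lemma ok_r: "0 < r" using ok by (simp add: chart_ok_def)
lemma ok_hc: "continuous_on UNIV h" using ok by (simp add: chart_ok_def)
lemma ok1: "z \<in> ball p r \<Longrightarrow> 0 < h z \<Longrightarrow> z \<in> Dreg" using ok by (simp add: chart_ok_def)
lemma ok2: "z \<in> ball p r \<Longrightarrow> h z < 0 \<Longrightarrow> z + \<tau> \<in> Dreg" using ok by (simp add: chart_ok_def)
lemma ok3: "z \<in> ball p r \<Longrightarrow> h z = 0 \<Longrightarrow> (z, z + \<tau>) \<in> rel" using ok by (simp add: chart_ok_def)
lemma ok4: "y \<in> YY \<Longrightarrow> y \<in> ball p r \<Longrightarrow> h y < 0 \<Longrightarrow> \<tau> = 0" using ok unfolding chart_ok_def by blast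
lemma ok5: "y \<in> YY \<Longrightarrow> y \<in> ball (p + \<tau>) r \<Longrightarrow> 0 < h (y - \<tau>) \<Longrightarrow> \<tau> = 0" using ok unfolding chart_ok_def by blast
lemma ok6: "\<tau> \<noteq> 0 \<Longrightarrow> 2*r \<le> norm \<tau>" using ok by (simp add: chart_ok_def)
lemma ok7: "\<tau> = 0 \<Longrightarrow> ball p r \<subseteq> Dreg" using ok by (simp add: chart_ok_def)
lemma ok8: "\<tau> \<noteq> 0 \<Longrightarrow> z \<in> ball p r \<Longrightarrow> h z = 0 \<Longrightarrow> (z, y) \<in> rel \<Longrightarrow> y = z \<or> y = z + \<tau>"
  using ok unfolding chart_ok_def by blast

lemma Dreg_YY: "z \<in> Dreg \<Longrightarrow> z \<in> YY" by (simp add: YY_def)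

lemma pos_Y: "z \<in> ball p r \<Longrightarrow> 0 \<le> h z \<Longrightarrow> z \<in> YY"
proof -
  assume a: "z \<in> ball p r" "0 \<le> h z"
  show ?thesis
  proof (cases "h z = 0")
    case True then show ?thesis using ok3[OF a(1)] rel_iff by blast
  next
    case False then show ?thesis using ok1[OF a(1)] a(2) Dreg_YY by simp
  qed
qed

lemma neg_Y: "z \<in> ball p r \<Longrightarrow> h z \<le> 0 \<Longrightarrow> z + \<tau> \<in> YY"
proof -
  assume a: "z \<in> ball p r" "h z \<le> 0"
  show ?thesis
  proof (cases "h z = 0")
    case True then show ?thesis using ok3[OF a(1)] rel_iff by blast
  next
    case False then show ?thesis using ok2[OF a(1)] a(2) Dreg_YY by simp
  qed
qed

lemma lift0: "lift 0 h z = z" by (simp add: lift_def)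

lemma lift_Y: "z \<in> ball p r \<Longrightarrow> lift \<tau> h z \<in> YY"
  using pos_Y neg_Y unfolding lift_def by auto

lemma lift_notD: "z \<in> ball p r \<Longrightarrow> lift \<tau> h z \<notin> Dreg \<Longrightarrow> h z = 0"
proof (rule ccontr)
  assume a: "z \<in> ball p r" "lift \<tau> h z \<notin> Dreg" "h z \<noteq> 0"
  show False
  proof (cases "0 < h z")
    case True then show False using a ok1 by (simp add: lift_def)
  next
    case False then have "h z < 0" using a(3) by simp
    then show False using a ok2 by (simp add: lift_def)
  qed
qed

lemma far: "\<tau> \<noteq> 0 \<Longrightarrow> z \<in> ball p r \<Longrightarrow> w \<in> ball p r \<Longrightarrow> z \<noteq> w + \<tau>"
proof
  assume a: "\<tau> \<noteq> 0" "z \<in> ball p r" "w \<in> ball p r" "z = w + \<tau>"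
  have "dist z w < 2*r" using a(2,3) dist_triangle_less_add[of z p r w r]
    by (simp add: dist_commute)
  moreover have "dist z w = norm \<tau>" using a(4) by (simp add: dist_norm)
  ultimately show False using ok6 a(1) by simp
qed

lemma lift_inj: "z \<in> ball p r \<Longrightarrow> w \<in> ball p r \<Longrightarrow> lift \<tau> h z = lift \<tau> h w \<Longrightarrow> z = w"
  using far unfolding lift_def
  by (cases "\<tau> = 0") (auto split: if_splits)

lemma pr_lift_inj: "inj_on (\<lambda>z. pr (lift \<tau> h z)) (ball p r)"
proof (rule inj_onI)
  fix z w assume zw: "z \<in> ball p r" "w \<in> ball p r" "pr (lift \<tau> h z) = pr (lift \<tau> h w)"
  then have R: "(lift \<tau> h z, lift \<tau> h w) \<in> rel" using pr_eq lift_Y by blast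
  show "z = w"
  proof (cases "lift \<tau> h z \<in> Dreg \<or> lift \<tau> h w \<in> Dreg")
    case True
    then have "lift \<tau> h z = lift \<tau> h w"
      using R rel_Dreg rel_equiv by (metis sym_def equivE)
    then show ?thesis using lift_inj zw by blast
  next
    case False
    then have "\<tau> \<noteq> 0" using ok7 zw lift0 by (metis subsetD)
    have "h z = 0" "h w = 0" using False lift_notD zw by blast+
    then have "(z, w) \<in> rel" using R by (simp add: lift_def)
    then have "w = z \<or> w = z + \<tau>" using ok8 \<open>\<tau> \<noteq> 0\<close> zw \<open>h z = 0\<close> by blast
    then show ?thesis using far[OF \<open>\<tau> \<noteq> 0\<close> zw(2,1)] by auto
  qed
qed

lemma phi_pr: "z \<in> ball p r \<Longrightarrow> chphi p r \<tau> h (pr (lift \<tau> h z)) = z"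
  unfolding chphi_def using inv_into_f_f[OF pr_lift_inj] by blast

lemma lift_self: "y \<in> YY \<Longrightarrow> y \<in> ball p r \<Longrightarrow> lift \<tau> h y = y"
  using ok4 unfolding lift_def by fastforce

lemma pr_shift:
  assumes "y \<in> YY" "y \<in> ball (p + \<tau>) r"
  shows "y - \<tau> \<in> ball p r \<and> pr (lift \<tau> h (y - \<tau>)) = pr y"
proof -
  have b: "y - \<tau> \<in> ball p r" using assms(2) by (simp add: dist_norm algebra_simps mem_ball)
  consider "h (y - \<tau>) < 0" | "h (y - \<tau>) = 0" | "0 < h (y - \<tau>)" by fastforce
  then show ?thesis
  proof cases
    case 1 then show ?thesis using b by (simp add: lift_def)
  next
    case 2 then show ?thesis using b ok3[OF b] pr_eq_rel by (simp add: lift_def)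
  next
    case 3 then have "\<tau> = 0" using ok5 assms by blast
    then show ?thesis using b by (simp add: lift_def)
  qed
qed

lemma PW_eq: "{y \<in> YY. pr y \<in> chW p r \<tau> h} = YY \<inter> (ball p r \<union> ball (p + \<tau>) r)"
proof (intro set_eqI iffI)
  fix y assume "y \<in> {y \<in> YY. pr y \<in> chW p r \<tau> h}"
  then obtain z where y: "y \<in> YY" and z: "z \<in> ball p r" "pr y = pr (lift \<tau> h z)"
    by (auto simp: chW_def)
  then have R: "(lift \<tau> h z, y) \<in> rel" using pr_eq lift_Y by metis
  show "y \<in> YY \<inter> (ball p r \<union> ball (p + \<tau>) r)"
  proof (cases "lift \<tau> h z \<in> Dreg")
    case True
    then have "y = lift \<tau> h z" using R rel_Dreg by blast
    then show ?thesis using y z by (auto simp: lift_def dist_norm algebra_simps mem_ball)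
  next
    case False
    then have "\<tau> \<noteq> 0" using ok7 z lift0 by (metis subsetD)
    have "h z = 0" using False lift_notD z by blast
    then have "y = z \<or> y = z + \<tau>" using ok8 \<open>\<tau> \<noteq> 0\<close> z R by (simp add: lift_def)
    then show ?thesis using y z by (auto simp: dist_norm algebra_simps mem_ball)
  qed
next
  fix y assume y: "y \<in> YY \<inter> (ball p r \<union> ball (p + \<tau>) r)"
  then show "y \<in> {y \<in> YY. pr y \<in> chW p r \<tau> h}"
  proof (cases "y \<in> ball p r")
    case True then show ?thesis using y lift_self[of y] unfolding chW_def by (metis (mono_tags) IntD1 image_eqI mem_Collect_eq)
  next
    case False
    then have "y \<in> ball (p + \<tau>) r" using y by blast
    then show ?thesis using y pr_shift[of y] unfolding chW_def by (metis (mono_tags) IntD1 image_eqI mem_Collect_eq)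
  qed
qed

lemma chW_open: "openin TT (chW p r \<tau> h)"
proof (rule X_sub)
  show "chW p r \<tau> h \<subseteq> XX" unfolding chW_def using lift_Y pr_in_X by auto
  have "openin (top_of_set YY) (YY \<inter> (ball p r \<union> ball (p + \<tau>) r))" by (auto intro: openin_open_Int)
  then show "openin (top_of_set YY) {y \<in> YY. pr y \<in> chW p r \<tau> h}" using PW_eq by simp
qed

lemma phi_on_PW1: "y \<in> YY \<Longrightarrow> y \<in> ball p r \<Longrightarrow> chphi p r \<tau> h (pr y) = y"
  using phi_pr lift_self by metis

lemma phi_on_PW2: "y \<in> YY \<Longrightarrow> y \<in> ball (p + \<tau>) r \<Longrightarrow> chphi p r \<tau> h (pr y) = y - \<tau>"
  using phi_pr pr_shift by metis

lemma balls_disj: "\<tau> \<noteq> 0 \<Longrightarrow> ball p r \<inter> ball (p + \<tau>) r = {}"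
proof (rule ccontr)
  assume a: "\<tau> \<noteq> 0" "ball p r \<inter> ball (p + \<tau>) r \<noteq> {}"
  then obtain x where "dist p x < r" "dist (p + \<tau>) x < r" by auto
  then have "dist p (p + \<tau>) < 2*r" using dist_triangle_less_add[of p x r "p+\<tau>" r] by (simp add: dist_commute)
  then show False using ok6 a(1) by (simp add: dist_norm)
qed

lemma phi_cont: "continuous_map (subtopology TT (chW p r \<tau> h)) (top_of_set (ball p r)) (chphi p r \<tau> h)"
proof (rule cont_from_quot[OF chW_open])
  fix P assume "P \<in> chW p r \<tau> h"
  then obtain z where "z \<in> ball p r" "P = pr (lift \<tau> h z)" unfolding chW_def by blast
  then show "chphi p r \<tau> h P \<in> ball p r" using phi_pr by simp
next
  let ?S = "YY \<inter> ball p r" and ?T = "YY \<inter> ball (p + \<tau>) r"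
  have eq: "(chphi p r \<tau> h \<circ> pr) y = (if y \<in> ball p r then y else y - \<tau>)" if "y \<in> ?S \<union> ?T" for y
    using that phi_on_PW1 phi_on_PW2 by auto
  have "continuous_on (?S \<union> ?T) (\<lambda>y. if y \<in> ball p r then y else y - \<tau>)"
  proof (rule continuous_on_cases_local_open)
    show "openin (top_of_set (?S \<union> ?T)) ?S" "openin (top_of_set (?S \<union> ?T)) ?T"
      by (auto intro!: openin_open_Int simp: openin_open)
    show "continuous_on ?S (\<lambda>y. y)" "continuous_on ?T (\<lambda>y. y - \<tau>)" by (auto intro: continuous_intros)
    show "\<And>x. x \<in> ?S \<and> x \<notin> ball p r \<or> x \<in> ?T \<and> x \<in> ball p r \<Longrightarrow> x = x - \<tau>"
      using balls_disj by (cases "\<tau> = 0") auto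
  qed
  then show "continuous_on {y \<in> YY. pr y \<in> chW p r \<tau> h} (chphi p r \<tau> h \<circ> pr)"
    unfolding PW_eq using eq by (auto intro: continuous_on_eq simp: Int_Un_distrib)
qed

lemma psi_cont: "continuous_map (top_of_set (ball p r)) (subtopology TT (chW p r \<tau> h)) (\<lambda>z. pr (lift \<tau> h z))"
proof (rule continuous_map_into_subtopology)
  show "(\<lambda>z. pr (lift \<tau> h z)) \<in> topspace (top_of_set (ball p r)) \<rightarrow> chW p r \<tau> h" by (auto simp: chW_def)
  have eqf: "(\<lambda>z. pr (lift \<tau> h z)) = (\<lambda>z. if (\<lambda>_. 0) z \<le> h z then pr z else pr (z + \<tau>))"
    by (rule ext) (simp add: lift_def)
  have A: "{x. x \<in> topspace (top_of_set (ball p r)) \<and> 0 \<le> h x} \<subseteq> YY"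
    using pos_Y by auto
  have B: "(\<lambda>z. z + \<tau>) ` {x. x \<in> topspace (top_of_set (ball p r)) \<and> h x \<le> 0} \<subseteq> YY"
    using neg_Y by auto
  show "continuous_map (top_of_set (ball p r)) TT (\<lambda>z. pr (lift \<tau> h z))"
    unfolding eqf
  proof (rule continuous_map_cases_le)
    show "continuous_map (top_of_set (ball p r)) euclideanreal (\<lambda>_. 0)" by simp
    show "continuous_map (top_of_set (ball p r)) euclideanreal h"
      using continuous_on_subset[OF ok_hc] by simp
    show "continuous_map (subtopology (top_of_set (ball p r)) {x. x \<in> topspace (top_of_set (ball p r)) \<and> 0 \<le> h x}) TT pr"
    proof -
      have "continuous_map (subtopology (top_of_set (ball p r)) {x. x \<in> topspace (top_of_set (ball p r)) \<and> 0 \<le> h x}) (top_of_set YY) (\<lambda>z. z)"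
        using A by (auto simp: continuous_map_in_subtopology subtopology_subtopology)
      then show ?thesis using continuous_map_compose[OF _ cont_pr] by (simp add: o_def)
    qed
    show "continuous_map (subtopology (top_of_set (ball p r)) {x. x \<in> topspace (top_of_set (ball p r)) \<and> h x \<le> 0}) TT (\<lambda>z. pr (z + \<tau>))"
    proof -
      have "continuous_map (subtopology (top_of_set (ball p r)) {x. x \<in> topspace (top_of_set (ball p r)) \<and> h x \<le> 0}) (top_of_set YY) (\<lambda>z. z + \<tau>)"
        using B by (auto simp: continuous_map_in_subtopology subtopology_subtopology intro!: continuous_intros)
      then show ?thesis using continuous_map_compose[OF _ cont_pr] by (simp add: o_def)
    qed
    show "\<And>x. x \<in> topspace (top_of_set (ball p r)) \<Longrightarrow> 0 = h x \<Longrightarrow> pr x = pr (x + \<tau>)"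
      using ok3 pr_eq_rel by simp
  qed
qed

lemma phi_image: "chphi p r \<tau> h ` chW p r \<tau> h = ball p r"
proof
  show "chphi p r \<tau> h ` chW p r \<tau> h \<subseteq> ball p r"
  proof
    fix x assume "x \<in> chphi p r \<tau> h ` chW p r \<tau> h"
    then obtain z where "z \<in> ball p r" "x = chphi p r \<tau> h (pr (lift \<tau> h z))" unfolding chW_def by blast
    then show "x \<in> ball p r" using phi_pr by simp
  qed
  show "ball p r \<subseteq> chphi p r \<tau> h ` chW p r \<tau> h"
  proof
    fix z assume z: "z \<in> ball p r"
    then have "pr (lift \<tau> h z) \<in> chW p r \<tau> h" unfolding chW_def by blast
    then show "z \<in> chphi p r \<tau> h ` chW p r \<tau> h" using phi_pr[OF z] by (metis image_eqI)
  qed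
qed

lemma chart_homeo: "homeomorphic_map (subtopology TT (chW p r \<tau> h)) (top_of_set (chphi p r \<tau> h ` chW p r \<tau> h)) (chphi p r \<tau> h)"
  unfolding homeomorphic_map_maps phi_image
proof (intro exI[of _ "\<lambda>z. pr (lift \<tau> h z)"])
  have ts: "topspace (subtopology TT (chW p r \<tau> h)) = chW p r \<tau> h"
    using openin_subset[OF chW_open] by (auto simp: topspace_subtopology)
  show "homeomorphic_maps (subtopology TT (chW p r \<tau> h)) (top_of_set (ball p r)) (chphi p r \<tau> h) (\<lambda>z. pr (lift \<tau> h z))"
    unfolding homeomorphic_maps_def
  proof (intro conjI phi_cont psi_cont ballI)
    fix x assume "x \<in> topspace (subtopology TT (chW p r \<tau> h))"
    then have "x \<in> chW p r \<tau> h" using ts by simp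
    then obtain z where "z \<in> ball p r" "x = pr (lift \<tau> h z)" unfolding chW_def by blast
    then show "pr (lift \<tau> h (chphi p r \<tau> h x)) = x" using phi_pr by simp
  next
    fix z assume "z \<in> topspace (top_of_set (ball p r))"
    then show "chphi p r \<tau> h (pr (lift \<tau> h z)) = z" using phi_pr by simp
  qed
qed

lemma chart_region:
  assumes x: "x \<in> Dreg" "pr x \<in> chW p r \<tau> h"
  shows "\<exists>d>0. \<forall>y \<in> ball x d. y \<in> Dreg \<and> pr y \<in> chW p r \<tau> h \<and>
           chphi p r \<tau> h (pr y) - y = chphi p r \<tau> h (pr x) - x"
proof -
  have xY: "x \<in> YY" using x Dreg_YY by blast
  then have xb: "x \<in> ball p r \<or> x \<in> ball (p + \<tau>) r" using PW_eq x by blast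
  have PWsub: "y \<in> YY \<Longrightarrow> y \<in> ball p r \<union> ball (p + \<tau>) r \<Longrightarrow> pr y \<in> chW p r \<tau> h" for y
    using PW_eq by blast
  show ?thesis
  proof (cases "x \<in> ball p r")
    case True
    obtain d where d: "d > 0" "ball x d \<subseteq> Dreg \<inter> ball p r"
      using True x(1) open_Dreg by (metis open_Int open_ball openE IntI)
    show ?thesis
    proof (intro exI[of _ d] conjI ballI d(1))
      fix y assume y: "y \<in> ball x d"
      then have yD: "y \<in> Dreg" "y \<in> ball p r" using d by auto
      then show "y \<in> Dreg" "pr y \<in> chW p r \<tau> h" using PWsub Dreg_YY by auto
      show "chphi p r \<tau> h (pr y) - y = chphi p r \<tau> h (pr x) - x"
        using phi_on_PW1 yD Dreg_YY True xY by simp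
    qed
  next
    case False
    then have xb2: "x \<in> ball (p + \<tau>) r" using xb by blast
    obtain d where d: "d > 0" "ball x d \<subseteq> Dreg \<inter> ball (p + \<tau>) r"
      using xb2 x(1) open_Dreg by (metis open_Int open_ball openE IntI)
    show ?thesis
    proof (intro exI[of _ d] conjI ballI d(1))
      fix y assume y: "y \<in> ball x d"
      then have yD: "y \<in> Dreg" "y \<in> ball (p + \<tau>) r" using d by auto
      then show "y \<in> Dreg" "pr y \<in> chW p r \<tau> h" using PWsub Dreg_YY by auto
      show "chphi p r \<tau> h (pr y) - y = chphi p r \<tau> h (pr x) - x"
        using phi_on_PW2 yD Dreg_YY xb2 xY by simp
    qed
  qed
qed

lemma chart_is_translation_chart: "translation_chart lam (chW p r \<tau> h) (chphi p r \<tau> h)"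
  unfolding translation_chart_def region_eq
  using chW_open chart_homeo chart_region phi_image by auto

end
end


datatype side = AB | BC | CD | DE | EF | FA

lemma side_UNIV: "(UNIV :: side set) = {AB, BC, CD, DE, EF, FA}"
  using side.exhaust by auto

instance side :: finite
  by standard (simp add: side_UNIV)

fun nx :: "side \<Rightarrow> side" where
  "nx AB = CD" | "nx BC = DE" | "nx CD = EF" | "nx DE = FA" | "nx EF = AB" | "nx FA = BC"
fun pv :: "side \<Rightarrow> side" where
  "pv CD = AB" | "pv DE = BC" | "pv EF = CD" | "pv FA = DE" | "pv AB = EF" | "pv BC = FA"
fun opp :: "side \<Rightarrow> side" where
  "opp AB = DE" | "opp BC = EF" | "opp CD = FA" | "opp DE = AB" | "opp EF = BC" | "opp FA = CD"

lemma nx_pv [simp]: "nx (pv e) = e" by (cases e) auto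
lemma pv_nx [simp]: "pv (nx e) = e" by (cases e) auto
lemma nx_inj: "nx a = nx b \<longleftrightarrow> a = b" by (metis pv_nx)

context lad begin

definition Kk where "Kk j = t j + t (Suc j)"
definition sg where "sg j = t j + t (j+1) + t (j+2)"

definition hs :: "side \<Rightarrow> nat \<Rightarrow> real^2 \<Rightarrow> real" where
  "hs e j z = (case e of AB \<Rightarrow> z$1 + z$2 - Kk j | BC \<Rightarrow> z$2 - t j | CD \<Rightarrow> t (j+2) - z$1
     | DE \<Rightarrow> Kk (j+1) - z$1 - z$2 | EF \<Rightarrow> t (j+2) - z$2 | FA \<Rightarrow> z$1 - t j)"

definition ts :: "side \<Rightarrow> nat \<Rightarrow> real^2" where
  "ts e j = (case e of AB \<Rightarrow> 0 | BC \<Rightarrow> pt 0 (t (j+3) - t j) | CD \<Rightarrow> pt (t (j-1) - t (j+2)) 0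
     | DE \<Rightarrow> 0 | EF \<Rightarrow> pt 0 (t (j-1) - t (j+2)) | FA \<Rightarrow> pt (t (j+3) - t j) 0)"

definition js :: "side \<Rightarrow> nat \<Rightarrow> nat" where
  "js e j = (case e of AB \<Rightarrow> j - 1 | BC \<Rightarrow> j + 1 | CD \<Rightarrow> j - 1 | DE \<Rightarrow> j + 1 | EF \<Rightarrow> j - 1 | FA \<Rightarrow> j + 1)"

definition valid :: "side \<Rightarrow> nat \<Rightarrow> bool" where
  "valid e j \<longleftrightarrow> (e \<in> {AB, CD, EF} \<longrightarrow> 1 \<le> j)"

definition Hex :: "nat \<Rightarrow> (real^2) set" where "Hex j = {z. \<forall>e. 0 < hs e j z}"
definition Sd :: "side \<Rightarrow> nat \<Rightarrow> (real^2) set" where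
  "Sd e j = {z. hs e j z = 0 \<and> (\<forall>e'. e' \<noteq> e \<longrightarrow> 0 < hs e' j z)}"
definition cH :: "nat \<Rightarrow> (real^2) set" where "cH j = Hex j \<union> (\<Union>e. Sd e j)"

definition gm :: "nat \<Rightarrow> real^2 \<Rightarrow> real^2" where "gm j z = pt (sg j - z$1 - z$2) (z$1)"

lemma hs_nx_gm: "hs (nx e) j (gm j z) = hs e j z"
  by (cases e) (simp_all add: hs_def gm_def Kk_def sg_def)

lemma hs_gm: "hs e j (gm j z) = hs (pv e) j z"
  using hs_nx_gm[of "pv e" j z] by simp

lemma gm_Hex: assumes "z \<in> Hex j" shows "gm j z \<in> Hex j"
proof -
  have "0 < hs e j (gm j z)" for e
    using assms unfolding Hex_def hs_gm[of e j z] by blast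
  then show ?thesis unfolding Hex_def by blast
qed

lemma gm_Sd: assumes "z \<in> Sd e j" shows "gm j z \<in> Sd (nx e) j"
proof -
  have "hs (nx e) j (gm j z) = 0" using assms unfolding Sd_def hs_nx_gm by blast
  moreover have "0 < hs e' j (gm j z)" if "e' \<noteq> nx e" for e'
  proof -
    have "pv e' \<noteq> e" using that by auto
    then show ?thesis using assms unfolding Sd_def hs_gm[of e' j z] by blast
  qed
  ultimately show ?thesis unfolding Sd_def by blast
qed

lemma gm_cH: "z \<in> cH j \<Longrightarrow> gm j z \<in> cH j"
  unfolding cH_def using gm_Hex gm_Sd by blast

lemma gm3: "gm j (gm j (gm j z)) = z"
  by (simp add: gm_def pt_expand[symmetric])

lemma gm_Rmat: "gm j z = Rmat *v z + pt (sg j) 0"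
  by (simp add: gm_def Rmat_def vec_eq_iff forall_2 matrix_vector_mult_def sum_2 pt_def)

lemma gm_lip: "dist (gm j z) (gm j w) \<le> 2 * dist z w"
proof -
  have "gm j z - gm j w = pt (-(z$1 - w$1) - (z$2 - w$2)) (z$1 - w$1)"
    by (simp add: gm_def)
  then have "dist (gm j z) (gm j w) = sqrt ((-(z$1 - w$1) - (z$2 - w$2))^2 + (z$1 - w$1)^2)"
    by (simp add: dist_norm norm_pt)
  also have "\<dots> \<le> sqrt (4 * ((z$1 - w$1)^2 + (z$2 - w$2)^2))"
    by (rule real_sqrt_le_mono) (smt (verit) zero_le_power2 power2_diff power2_sum)
  also have "\<dots> = 2 * sqrt ((z$1 - w$1)^2 + (z$2 - w$2)^2)"
    by (simp only: real_sqrt_mult real_sqrt_four)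
  also have "\<dots> = 2 * dist z w"
    using dist_pt[of "z$1" "z$2" "w$1" "w$2"] by (simp add: pt_expand[symmetric])
  finally show ?thesis .
qed

lemma hs_lip: "\<bar>hs e j z - hs e j w\<bar> \<le> 2 * dist z w"
proof -
  have a: "\<bar>z$1 - w$1\<bar> \<le> dist z w" "\<bar>z$2 - w$2\<bar> \<le> dist z w"
    using comp1_le_dist comp2_le_dist by auto
  show ?thesis using a by (cases e) (auto simp: hs_def abs_le_iff)
qed

lemma hs_cont: "continuous_on UNIV (hs e j)"
  by (cases e) (auto simp: hs_def intro!: continuous_intros)

lemma js_nx: "js (nx e) j = js e j" by (cases e) (simp_all add: js_def)

lemma gm_ts:
  assumes "valid e j"
  shows "gm (js e j) (z + ts e j) = gm j z + ts (nx e) j"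
proof (cases e)
  case AB
  then obtain i where i: "j = Suc i" using assms by (cases j) (auto simp: valid_def)
  then show ?thesis using AB by (simp add: gm_def ts_def js_def sg_def)
next
  case BC then show ?thesis by (simp add: gm_def ts_def js_def sg_def)
next
  case CD
  then obtain i where i: "j = Suc i" using assms by (cases j) (auto simp: valid_def)
  then show ?thesis using CD by (simp add: gm_def ts_def js_def sg_def)
next
  case DE then show ?thesis by (simp add: gm_def ts_def js_def sg_def)
next
  case EF
  then obtain i where i: "j = Suc i" using assms by (cases j) (auto simp: valid_def)
  then show ?thesis using EF by (simp add: gm_def ts_def js_def sg_def)
next
  case FA then show ?thesis by (simp add: gm_def ts_def js_def sg_def)
qed

lemma valid_nx: "valid e j \<Longrightarrow> valid (nx e) j \<or> 1 \<le> j"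
  by (cases e) (auto simp: valid_def)

lemma hs_opp:
  assumes "valid e j"
  shows "hs (opp e) (js e j) (z + ts e j) = - hs e j z"
proof (cases e)
  case AB
  then obtain i where i: "j = Suc i" using assms by (cases j) (auto simp: valid_def)
  then show ?thesis using AB by (simp add: hs_def ts_def js_def Kk_def)
next
  case CD
  then obtain i where i: "j = Suc i" using assms by (cases j) (auto simp: valid_def)
  then show ?thesis using CD by (simp add: hs_def ts_def js_def)
next
  case EF
  then obtain i where i: "j = Suc i" using assms by (cases j) (auto simp: valid_def)
  then show ?thesis using EF by (simp add: hs_def ts_def js_def)
qed (simp_all add: hs_def ts_def js_def Kk_def)

end


lemma all_side: "(\<forall>e. P e) \<longleftrightarrow> P AB \<and> P BC \<and> P CD \<and> P DE \<and> P EF \<and> P FA"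
  by (metis side.exhaust)

context lad begin

lemma tf: "t j \<le> t (Suc j)" "t (Suc j) < t (Suc (Suc j))" "t (Suc (Suc j)) < t (Suc (Suc (Suc j)))"
  "t j < t (Suc (Suc j))"
  using t_Suc_ge[of j] t_strict[of "Suc j" "Suc (Suc j)"] t_strict[of "Suc (Suc j)" "Suc (Suc (Suc j))"]
    t_Suc_ge[of j] by auto

lemma Sd_iff: "z \<in> Sd e j \<longleftrightarrow> hs e j z = 0 \<and> (\<forall>e'. e' \<noteq> e \<longrightarrow> 0 < hs e' j z)"
  by (simp add: Sd_def)

lemma Hex_iff: "z \<in> Hex j \<longleftrightarrow> t j < z$1 \<and> z$1 < t (j+2) \<and> t j < z$2 \<and> z$2 < t (j+2) \<and>
    Kk j < z$1 + z$2 \<and> z$1 + z$2 < Kk (j+1)"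
  unfolding Hex_def all_side by (auto simp: hs_def)

lemma Sd_BC: "Sd BC j = LH j"
  using tf[of j] unfolding Sd_def all_side set_eq_iff by (auto simp: hs_def in_LH Kk_def)
lemma Sd_CD: "Sd CD j = LV j"
  using tf[of j] unfolding Sd_def all_side set_eq_iff by (auto simp: hs_def in_LV Kk_def)
lemma Sd_EF: "Sd EF j = UH j"
  using tf[of j] unfolding Sd_def all_side set_eq_iff by (auto simp: hs_def in_UH Kk_def)
lemma Sd_FA: "Sd FA j = UV j"
  using tf[of j] unfolding Sd_def all_side set_eq_iff by (auto simp: hs_def in_UV Kk_def)
lemma Sd_AB: "Sd AB j = {z. z$1 + z$2 = Kk j \<and> t j < z$1 \<and> z$1 < t (j+1)}"
  using tf[of j] unfolding Sd_def all_side set_eq_iff by (auto simp: hs_def Kk_def)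
lemma Sd_DE: "Sd DE j = Sd AB (j+1)"
  using tf[of j] tf[of "Suc j"] unfolding Sd_AB unfolding Sd_def all_side set_eq_iff by (auto simp: hs_def Kk_def)

lemma Sd_valid: "z \<in> Sd e j \<Longrightarrow> valid e j"
proof (rule ccontr)
  assume a: "z \<in> Sd e j" "\<not> valid e j"
  then have j: "j = 0" "e \<in> {AB, CD, EF}" by (auto simp: valid_def)
  then show False using a(1) by (auto simp: Sd_AB Sd_CD Sd_EF in_LV in_UH)
qed

lemma Hex_Sq: "Hex j \<subseteq> Sq j" by (auto simp: Hex_iff in_Sq)
lemma Sq_Dreg: "Sq j \<subseteq> Dreg" by (auto simp: Dreg_def)
lemma Hex_Dreg: "Hex j \<subseteq> Dreg" using Hex_Sq Sq_Dreg by blast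
lemma Sd_AB_Sq: "Sd AB j \<subseteq> Sq j"
  using tf[of j] by (auto simp: Sd_AB in_Sq Kk_def)
lemma Sd_AB_Dreg: "Sd AB j \<subseteq> Dreg" using Sd_AB_Sq Sq_Dreg by blast
lemma Sd_DE_Dreg: "Sd DE j \<subseteq> Dreg" using Sd_AB_Dreg Sd_DE by blast

lemma YY_Dreg: "Dreg \<subseteq> YY" by (auto simp: YY_def)
lemma Ledg_YY: "Ledg \<subseteq> YY" by (auto simp: YY_def)
lemma Uedg_YY: "Uedg \<subseteq> YY" by (auto simp: YY_def)

lemma Sd_YY: "Sd e j \<subseteq> YY"
proof (cases e)
  case AB then show ?thesis using Sd_AB_Dreg YY_Dreg by blast
next
  case BC then show ?thesis using Ledg_YY by (auto simp: Sd_BC Ledg_def)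
next
  case CD then show ?thesis using Ledg_YY by (auto simp: Sd_CD Ledg_def)
next
  case DE then show ?thesis using Sd_DE_Dreg YY_Dreg by blast
next
  case EF then show ?thesis using Uedg_YY by (auto simp: Sd_EF Uedg_def)
next
  case FA then show ?thesis using Uedg_YY by (auto simp: Sd_FA Uedg_def)
qed

lemma cH_YY: "cH j \<subseteq> YY"
  unfolding cH_def using Hex_Dreg YY_Dreg Sd_YY by blast

lemma Sd_opp: assumes "z \<in> Sd e j" shows "z + ts e j \<in> Sd (opp e) (js e j)"
proof (cases e)
  case AB
  then obtain i where i: "j = Suc i" using Sd_valid[OF assms] by (cases j) (auto simp: valid_def)
  then show ?thesis using assms AB by (simp add: ts_def js_def Sd_DE)
next
  case BC then show ?thesis using assms LH_tauH by (simp add: ts_def js_def Sd_BC Sd_EF tauH_def)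
next
  case CD
  then obtain i where i: "j = Suc i" using Sd_valid[OF assms] by (cases j) (auto simp: valid_def)
  then show ?thesis using assms CD LV_tauV[of j z] by (simp add: ts_def js_def Sd_CD Sd_FA tauV_def)
next
  case DE then show ?thesis using assms by (simp add: ts_def js_def Sd_DE)
next
  case EF
  then obtain i where i: "j = Suc i" using Sd_valid[OF assms] by (cases j) (auto simp: valid_def)
  then show ?thesis using assms EF by (auto simp: ts_def js_def Sd_EF Sd_BC in_UH in_LH)
next
  case FA then show ?thesis using assms by (auto simp: ts_def js_def Sd_FA Sd_CD in_UV in_LV)
qed

lemma Sd_rel: assumes "z \<in> Sd e j" shows "(z, z + ts e j) \<in> rel"
proof -
  have zY: "z \<in> YY" using assms Sd_YY by blast
  have z'Y: "z + ts e j \<in> YY" using Sd_opp[OF assms] Sd_YY by blast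
  have "z = z + ts e j \<or> glueR z (z + ts e j) \<or> glueR (z + ts e j) z"
  proof (cases e)
    case AB then show ?thesis by (simp add: ts_def)
  next
    case DE then show ?thesis by (simp add: ts_def)
  next
    case BC then show ?thesis using assms unfolding glueR_def by (auto simp: ts_def Sd_BC tauH_def)
  next
    case CD
    then obtain i where i: "j = Suc i" using Sd_valid[OF assms] by (cases j) (auto simp: valid_def)
    then show ?thesis using assms CD unfolding glueR_def by (auto simp: ts_def Sd_CD tauV_def)
  next
    case EF
    then obtain i where i: "j = Suc i" using Sd_valid[OF assms] by (cases j) (auto simp: valid_def)
    have "z + ts e j \<in> LH i" using Sd_opp[OF assms] EF i by (simp add: js_def Sd_BC)
    moreover have "z = (z + ts e j) + tauH i" using EF i by (simp add: ts_def tauH_def vec_eq_iff forall_2)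
    ultimately show ?thesis unfolding glueR_def by blast
  next
    case FA
    have "z + ts e j \<in> LV (j+1)" using Sd_opp[OF assms] FA by (simp add: js_def Sd_CD)
    moreover have "z = (z + ts e j) + tauV (j+1)" using FA by (simp add: ts_def tauV_def vec_eq_iff forall_2)
    ultimately show ?thesis unfolding glueR_def by (metis le_add2)
  qed
  then show ?thesis using zY z'Y rel_iff by blast
qed

end


context lad begin

lemma Kk_step: "Kk a < Kk (Suc a)"
  using tf[of a] by (simp add: Kk_def)

lemma Kk_strict: "a < b \<Longrightarrow> Kk a < Kk b"
proof (induction b)
  case 0 then show ?case by simp
next
  case (Suc b)
  then show ?case using Kk_step[of b] by (cases "a = b") auto
qed

lemma Kk_mono: "a \<le> b \<Longrightarrow> Kk a \<le> Kk b"
  using Kk_strict by (cases "a = b") (auto simp: less_imp_le)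

lemma Kk_le_imp: "Kk a \<le> Kk b \<Longrightarrow> a \<le> b"
  using Kk_strict by (meson not_le order.strict_iff_not)

lemma Kk0: "Kk 0 = 0" by (simp add: Kk_def)

lemma hs_expand:
  "hs AB j z = z$1 + z$2 - Kk j" "hs BC j z = z$2 - t j" "hs CD j z = t (j+2) - z$1"
  "hs DE j z = Kk (j+1) - z$1 - z$2" "hs EF j z = t (j+2) - z$2" "hs FA j z = z$1 - t j"
  by (simp_all add: hs_def)

lemma YY_cover: assumes "z \<in> YY" shows "\<exists>j. z \<in> cH j"
proof -
  have Sd_in: "z \<in> Sd e j \<Longrightarrow> \<exists>j. z \<in> cH j" for e j by (auto simp: cH_def)
  have Hex_in: "z \<in> Hex j \<Longrightarrow> \<exists>j. z \<in> cH j" for j by (auto simp: cH_def)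
  consider "z \<in> Dreg" | "z \<in> Ledg" | "z \<in> Uedg" using assms by (auto simp: YY_def)
  then show ?thesis
  proof cases
    case 1
    then obtain i where i: "z \<in> Sq i" by (auto simp: Dreg_def)
    then have zi: "t i < z$1" "z$1 < t (i+2)" "t i < z$2" "z$2 < t (i+2)" by (auto simp: in_Sq)
    have ti: "t i \<le> t (i+1)" "t (i+1) < t (i+2)" "t (i+2) < t (i+3)" using tf[of i] by auto
    consider "z$1 + z$2 < Kk i" | "z$1 + z$2 = Kk i" | "Kk i < z$1 + z$2 \<and> z$1 + z$2 < Kk (i+1)"
      | "z$1 + z$2 = Kk (i+1)" | "Kk (i+1) < z$1 + z$2" by linarith
    then show ?thesis
    proof cases
      case 1
      then obtain k where k: "i = Suc k"
        using zi t_nonneg[of i] by (cases i) (auto simp: Kk_def)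
      have "t k \<le> t i" using t_mono k by simp
      then have "z \<in> Hex k" using zi 1 k by (auto simp: Hex_iff Kk_def)
      then show ?thesis by (rule Hex_in)
    next
      case 2
      have "z \<in> Sd AB i" unfolding Sd_iff all_side using zi 2 Kk_step[of i] ti
        by (auto simp: hs_expand Kk_def)
      then show ?thesis by (rule Sd_in)
    next
      case 3
      then have "z \<in> Hex i" using zi by (simp add: Hex_iff)
      then show ?thesis by (rule Hex_in)
    next
      case 4
      have "z \<in> Sd DE i" unfolding Sd_iff all_side using zi 4 Kk_step[of i] ti
        by (auto simp: hs_expand Kk_def)
      then show ?thesis by (rule Sd_in)
    next
      case 5
      have "z \<in> Hex (Suc i)" using zi 5 ti by (auto simp: Hex_iff Kk_def)
      then show ?thesis by (rule Hex_in)
    qed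
  next
    case 2
    then obtain j where "z \<in> LH j \<or> z \<in> LV j" by (auto simp: Ledg_def)
    then show ?thesis using Sd_in[of BC j] Sd_in[of CD j] by (auto simp: Sd_BC Sd_CD)
  next
    case 3
    then obtain j where "z \<in> UH j \<or> z \<in> UV j" by (auto simp: Uedg_def)
    then show ?thesis using Sd_in[of EF j] Sd_in[of FA j] by (auto simp: Sd_EF Sd_FA)
  qed
qed

lemma cH_ge: "z \<in> cH j \<Longrightarrow> 0 \<le> hs e j z"
  unfolding cH_def Hex_def Sd_def by (cases "e") (auto, (metis less_eq_real_def)+)

lemma cH_overlap:
  assumes "z \<in> cH j" "z \<in> cH k" "j < k"
  shows "k = Suc j \<and> z \<in> Sd DE j"
proof -
  have a: "0 \<le> hs DE j z" "0 \<le> hs AB k z" using cH_ge assms by blast+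
  then have "Kk k \<le> Kk (j+1)" by (simp add: hs_expand)
  then have k: "k = Suc j" using Kk_le_imp assms(3) by fastforce
  then have h0: "hs DE j z = 0" using a by (simp add: hs_expand)
  have "z \<notin> Hex j"
  proof
    assume "z \<in> Hex j"
    then have "0 < hs DE j z" unfolding Hex_def by blast
    then show False using h0 by simp
  qed
  then obtain e where e: "z \<in> Sd e j" using assms(1) by (auto simp: cH_def)
  have "e = DE"
  proof (rule ccontr)
    assume "e \<noteq> DE"
    then have "DE \<noteq> e" by simp
    then have "0 < hs DE j z" using e unfolding Sd_def by blast
    then show False using h0 by simp
  qed
  then show ?thesis using e k by simp
qed

lemma rel_two: "(w, a) \<in> rel \<Longrightarrow> (w, b) \<in> rel \<Longrightarrow> a = w \<or> b = w \<or> a = b"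
  using rel_iff glueR_LU glueR_fun glueR_inj Ledg_Uedg by metis

definition edge :: "side \<Rightarrow> bool" where "edge e \<longleftrightarrow> e \<in> {BC, CD, EF, FA}"

lemma ts_zero: "\<not> edge e \<Longrightarrow> ts e j = 0"
  by (cases e) (auto simp: edge_def ts_def)

lemma ts_nz: assumes "edge e" "valid e j" shows "ts e j \<noteq> 0"
proof (cases e)
  case BC then show ?thesis using tf[of j] tf[of "Suc j"] t_mono[of j "Suc j"]
    by (auto simp: ts_def pt_zero)
next
  case CD
  then obtain i where "j = Suc i" using assms by (cases j) (auto simp: valid_def)
  then show ?thesis using CD tf[of i] tf[of "Suc i"] by (auto simp: ts_def pt_zero)
next
  case EF
  then obtain i where "j = Suc i" using assms by (cases j) (auto simp: valid_def)
  then show ?thesis using EF tf[of i] tf[of "Suc i"] by (auto simp: ts_def pt_zero)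
next
  case FA then show ?thesis using tf[of j] tf[of "Suc j"] t_mono[of j "Suc j"]
    by (auto simp: ts_def pt_zero)
qed (use assms in \<open>auto simp: edge_def\<close>)

lemma YY_K0: "YY \<subseteq> K0"
proof -
  have "Ledg \<subseteq> Lpath lam" unfolding Ledg_def Lpath_eq
    by (auto simp: LH_def LV_def cLH_def cLV_def)
  moreover have "Uedg \<subseteq> Upath lam" using calculation by (auto simp: Uedg_sw Upath_eq)
  ultimately show ?thesis using Dreg_sub_K0 Lpath_sub_K0 Upath_sub_K0 by (auto simp: YY_def)
qed

lemma beyond_LH:
  assumes "p \<in> LH j"
  shows "\<exists>\<rho>>0. \<forall>y\<in>YY \<inter> ball p \<rho>. t j \<le> y$2"
proof -
  define \<rho> where "\<rho> = min (p$1 - t (j+1)) (t (j+2) - p$1)"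
  have pos: "\<rho> > 0" using assms by (auto simp: \<rho>_def in_LH)
  have "t j \<le> y$2" if y: "y \<in> YY" "y \<in> ball p \<rho>" for y
  proof -
    have "\<bar>y$1 - p$1\<bar> < \<rho>" using y(2) comp1_le_dist[of y p] by (simp add: dist_commute mem_ball)
    then have y1: "t (j+1) < y$1" "y$1 < t (j+2)" by (auto simp: \<rho>_def)
    obtain i where i: "y \<in> cSq i" using y(1) YY_K0 by (auto simp: K0_def)
    then have "t i < t (j+2)" "t (j+1) < t (i+2)" using y1 by (auto simp: in_cSq)
    then have "i < j + 2" "j + 1 < i + 2" using t_less_imp by blast+
    then have "j \<le> i" by simp
    then show ?thesis using i t_mono[of j i] by (auto simp: in_cSq)
  qed
  then show ?thesis using pos by blast
qed

lemma beyond_LV: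
  assumes "p \<in> LV j"
  shows "\<exists>\<rho>>0. \<forall>y\<in>YY \<inter> ball p \<rho>. y$1 \<le> t (j+2)"
proof -
  define \<rho> where "\<rho> = min (p$2 - t j) (t (j+1) - p$2)"
  have pos: "\<rho> > 0" using assms by (auto simp: \<rho>_def in_LV)
  have "y$1 \<le> t (j+2)" if y: "y \<in> YY" "y \<in> ball p \<rho>" for y
  proof -
    have "\<bar>y$2 - p$2\<bar> < \<rho>" using y(2) comp2_le_dist[of y p] by (simp add: dist_commute mem_ball)
    then have y2: "t j < y$2" "y$2 < t (j+1)" by (auto simp: \<rho>_def)
    obtain i where i: "y \<in> cSq i" using y(1) YY_K0 by (auto simp: K0_def)
    then have "t i < t (j+1)" using y2 by (auto simp: in_cSq)
    then have "i < j + 1" using t_less_imp by blast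
    then have "i + 2 \<le> j + 2" by simp
    then show ?thesis using i t_mono[of "i+2" "j+2"] by (auto simp: in_cSq)
  qed
  then show ?thesis using pos by blast
qed

lemma ball_sw: "y \<in> ball p r \<longleftrightarrow> sw y \<in> ball (sw p) r"
  by (simp add: mem_ball)

lemma beyond:
  assumes "edge e" "p \<in> Sd e j"
  shows "\<exists>\<rho>>0. \<forall>y\<in>YY \<inter> ball p \<rho>. 0 \<le> hs e j y"
proof -
  consider "e = BC" | "e = CD" | "e = EF" | "e = FA" using assms(1) by (auto simp: edge_def)
  then show ?thesis
  proof cases
    case 1 then show ?thesis using beyond_LH[of p j] assms(2) by (auto simp: Sd_BC hs_expand)
  next
    case 2 then show ?thesis using beyond_LV[of p j] assms(2) by (auto simp: Sd_CD hs_expand)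
  next
    case 3
    then have "sw p \<in> LV j" using assms(2) by (simp add: Sd_EF UH_sw sw_in_image)
    then obtain \<rho> where \<rho>: "\<rho> > 0" "\<forall>y\<in>YY \<inter> ball (sw p) \<rho>. y$1 \<le> t (j+2)" using beyond_LV by blast
    have "\<forall>y\<in>YY \<inter> ball p \<rho>. 0 \<le> hs e j y"
    proof
      fix y assume "y \<in> YY \<inter> ball p \<rho>"
      then have "sw y \<in> YY \<inter> ball (sw p) \<rho>" by (simp add: sw_YY ball_sw[symmetric])
      then have "(sw y)$1 \<le> t (j+2)" using \<rho>(2) by blast
      then show "0 \<le> hs e j y" using 3 by (simp add: hs_expand)
    qed
    then show ?thesis using \<rho>(1) by blast
  next
    case 4
    then have "sw p \<in> LH j" using assms(2) by (simp add: Sd_FA UV_sw sw_in_image)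
    then obtain \<rho> where \<rho>: "\<rho> > 0" "\<forall>y\<in>YY \<inter> ball (sw p) \<rho>. t j \<le> y$2" using beyond_LH by blast
    have "\<forall>y\<in>YY \<inter> ball p \<rho>. 0 \<le> hs e j y"
    proof
      fix y assume "y \<in> YY \<inter> ball p \<rho>"
      then have "sw y \<in> YY \<inter> ball (sw p) \<rho>" by (simp add: sw_YY ball_sw[symmetric])
      then have "t j \<le> (sw y)$2" using \<rho>(2) by blast
      then show "0 \<le> hs e j y" using 4 by (simp add: hs_expand)
    qed
    then show ?thesis using \<rho>(1) by blast
  qed
qed

lemma pos_near:
  assumes "\<forall>e\<in>S. 0 < hs e j p"
  shows "\<exists>r>0. \<forall>z\<in>ball p r. \<forall>e\<in>S. 0 < hs e j z"
proof (cases "S = {}")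
  case True then show ?thesis by (intro exI[of _ 1]) auto
next
  case False
  define M where "M = Min ((\<lambda>e. hs e j p) ` S)"
  have fin: "finite ((\<lambda>e. hs e j p) ` S)" by simp
  have M: "0 < M" unfolding M_def using assms False fin by (subst Min_gr_iff) auto
  have Mle: "M \<le> hs e j p" if "e \<in> S" for e unfolding M_def using fin that by simp
  show ?thesis
  proof (intro exI[of _ "M/2"] conjI ballI)
    show "0 < M/2" using M by simp
    fix z e assume z: "z \<in> ball p (M/2)" and e: "e \<in> S"
    have "\<bar>hs e j z - hs e j p\<bar> \<le> 2 * dist z p" by (rule hs_lip)
    moreover have "dist z p < M/2" using z by (simp add: dist_commute mem_ball)
    ultimately show "0 < hs e j z" using Mle[OF e] by linarith
  qed
qed

end


lemma cont_local:
  assumes loc: "\<And>x. x \<in> topspace X \<Longrightarrow> \<exists>U. openin X U \<and> x \<in> U \<and> continuous_map (subtopology X U) Y f"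
    and into: "f \<in> topspace X \<rightarrow> topspace Y"
  shows "continuous_map X Y f"
  unfolding continuous_map_def
proof (intro conjI allI impI into)
  fix V assume V: "openin Y V"
  show "openin X {x \<in> topspace X. f x \<in> V}"
  proof (subst openin_subopen, intro ballI)
    fix x assume x: "x \<in> {x \<in> topspace X. f x \<in> V}"
    then obtain U where U: "openin X U" "x \<in> U" "continuous_map (subtopology X U) Y f"
      using loc by blast
    have "openin (subtopology X U) {y \<in> topspace (subtopology X U). f y \<in> V}"
      using U(3) V by (simp add: continuous_map_def)
    then have "openin X {y \<in> topspace (subtopology X U). f y \<in> V}"
      using openin_trans_full U(1) by blast
    moreover have "{y \<in> topspace (subtopology X U). f y \<in> V} \<subseteq> {x \<in> topspace X. f x \<in> V}"
      by auto
    moreover have "x \<in> {y \<in> topspace (subtopology X U). f y \<in> V}" using x U(2) by auto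
    ultimately show "\<exists>T. openin X T \<and> x \<in> T \<and> T \<subseteq> {x \<in> topspace X. f x \<in> V}" by blast
  qed
qed

context lad begin

lemma dist_shift: "dist (z + a) (p + (a::real^2)) = dist z p" by (simp add: dist_norm)

lemma side_chart:
  assumes p: "p \<in> Sd e j"
  shows "\<exists>r>0. chart_ok p r (ts e j) (hs e j) \<and> (\<forall>z\<in>ball p r. 0 \<le> hs e j z \<longrightarrow> z \<in> cH j)
     \<and> (\<forall>z\<in>ball p r. hs e j z < 0 \<longrightarrow> z + ts e j \<in> Hex (js e j))"
proof -
  define \<tau> where "\<tau> = ts e j"
  define i where "i = js e j"
  define e2 where "e2 = opp e"
  have v: "valid e j" using Sd_valid p by blast
  have q: "p + \<tau> \<in> Sd e2 i" using Sd_opp p by (simp add: \<tau>_def i_def e2_def)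
  have hopp: "hs e2 i (z + \<tau>) = - hs e j z" for z using hs_opp[OF v] by (simp add: \<tau>_def i_def e2_def)
  obtain r1 where r1: "r1 > 0" "\<forall>z\<in>ball p r1. \<forall>e'\<in>{e'. e' \<noteq> e}. 0 < hs e' j z"
    using pos_near[of "{e'. e' \<noteq> e}" j p] p by (auto simp: Sd_def)
  obtain r2 where r2: "r2 > 0" "\<forall>z\<in>ball (p + \<tau>) r2. \<forall>e'\<in>{e'. e' \<noteq> e2}. 0 < hs e' i z"
    using pos_near[of "{e'. e' \<noteq> e2}" i "p + \<tau>"] q by (auto simp: Sd_def)
  have edge2: "edge e \<Longrightarrow> edge e2" by (cases e) (auto simp: edge_def e2_def)
  have "\<exists>\<rho>1>0. edge e \<longrightarrow> (\<forall>y\<in>YY \<inter> ball p \<rho>1. 0 \<le> hs e j y)"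
  proof (cases "edge e")
    case True then show ?thesis using beyond[OF True p] by blast
  next
    case False then show ?thesis by (intro exI[of _ 1]) auto
  qed
  then obtain \<rho>1 where \<rho>1: "\<rho>1 > 0" "edge e \<longrightarrow> (\<forall>y\<in>YY \<inter> ball p \<rho>1. 0 \<le> hs e j y)" by blast
  have "\<exists>\<rho>2>0. edge e \<longrightarrow> (\<forall>y\<in>YY \<inter> ball (p + \<tau>) \<rho>2. 0 \<le> hs e2 i y)"
  proof (cases "edge e")
    case True then show ?thesis using beyond[OF edge2[OF True] q] by blast
  next
    case False then show ?thesis by (intro exI[of _ 1]) auto
  qed
  then obtain \<rho>2 where \<rho>2: "\<rho>2 > 0" "edge e \<longrightarrow> (\<forall>y\<in>YY \<inter> ball (p + \<tau>) \<rho>2. 0 \<le> hs e2 i y)" by blast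
  define r where "r = min (min r1 r2) (min (min \<rho>1 \<rho>2) (if edge e then norm \<tau> / 2 else 1))"
  have tnz: "edge e \<Longrightarrow> \<tau> \<noteq> 0" using ts_nz[OF _ v] by (simp add: \<tau>_def)
  have t0: "\<not> edge e \<Longrightarrow> \<tau> = 0" using ts_zero by (simp add: \<tau>_def)
  have rpos: "r > 0" using r1 r2 \<rho>1 \<rho>2 tnz by (auto simp: r_def)
  have sub: "ball p r \<subseteq> ball p r1" "ball p r \<subseteq> ball p \<rho>1" by (auto simp: r_def)
  have sub2: "z + \<tau> \<in> ball (p + \<tau>) r2" if "z \<in> ball p r" for z
    using that by (auto simp: r_def mem_ball dist_commute dist_shift)
  have sub3: "ball (p + \<tau>) r \<subseteq> ball (p + \<tau>) \<rho>2" by (auto simp: r_def)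
  have others: "0 < hs e' j z" if "z \<in> ball p r" "e' \<noteq> e" for z e'
  proof -
    have "z \<in> ball p r1" using sub that(1) by blast
    moreover have "e' \<in> {e'. e' \<noteq> e}" using that(2) by simp
    ultimately show ?thesis using r1(2) by blast
  qed
  have others2: "0 < hs e' i (z + \<tau>)" if "z \<in> ball p r" "e' \<noteq> e2" for z e'
  proof -
    have "z + \<tau> \<in> ball (p + \<tau>) r2" using sub2 that(1) by blast
    moreover have "e' \<in> {e'. e' \<noteq> e2}" using that(2) by simp
    ultimately show ?thesis using r2(2) by blast
  qed
  have inHex: "z \<in> Hex j" if "z \<in> ball p r" "0 < hs e j z" for z
  proof -
    have "0 < hs e' j z" for e' using others[OF that(1), of e'] that(2) by (cases "e' = e") auto
    then show ?thesis unfolding Hex_def by blast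
  qed
  have inHex2: "z + \<tau> \<in> Hex i" if "z \<in> ball p r" "hs e j z < 0" for z
  proof -
    have "0 < hs e' i (z + \<tau>)" for e'
      using others2[OF that(1), of e'] hopp[of z] that(2) by (cases "e' = e2") auto
    then show ?thesis unfolding Hex_def by blast
  qed
  have inSd: "z \<in> Sd e j" if "z \<in> ball p r" "hs e j z = 0" for z
    unfolding Sd_def using others[OF that(1)] that(2) by blast
  have cut_D: "\<not> edge e \<Longrightarrow> Sd e j \<subseteq> Dreg"
    using Sd_AB_Dreg Sd_DE_Dreg by (cases e) (auto simp: edge_def)
  have ok: "chart_ok p r \<tau> (hs e j)"
    unfolding chart_ok_def
  proof (intro conjI ballI impI allI)
    show "0 < r" by (rule rpos)
    show "continuous_on UNIV (hs e j)" by (rule hs_cont)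
    fix z assume z: "z \<in> ball p r"
    { assume "0 < hs e j z" then show "z \<in> Dreg" using inHex[OF z] Hex_Dreg by blast }
    { assume "hs e j z < 0" then show "z + \<tau> \<in> Dreg" using inHex2[OF z] Hex_Dreg by blast }
    { assume "hs e j z = 0" then show "(z, z + \<tau>) \<in> rel" using inSd[OF z] Sd_rel by (simp add: \<tau>_def) }
    { fix y assume "\<tau> \<noteq> 0" "hs e j z = 0" "(z, y) \<in> rel"
      then have "(z, z + \<tau>) \<in> rel" using inSd[OF z] Sd_rel by (simp add: \<tau>_def)
      then show "y = z \<or> y = z + \<tau>" using rel_two \<open>(z, y) \<in> rel\<close> \<open>\<tau> \<noteq> 0\<close> by fastforce }
  next
    fix y assume y: "y \<in> YY \<inter> ball p r" "hs e j y < 0"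
    show "\<tau> = 0"
    proof (cases "edge e")
      case True then show ?thesis using \<rho>1 y sub by force
    next
      case False then show ?thesis using t0 by blast
    qed
  next
    fix y assume y: "y \<in> YY \<inter> ball (p + \<tau>) r" "0 < hs e j (y - \<tau>)"
    have "hs e2 i y < 0" using hopp[of "y - \<tau>"] y(2) by simp
    show "\<tau> = 0"
    proof (cases "edge e")
      case True then show ?thesis using \<rho>2 y sub3 \<open>hs e2 i y < 0\<close> by force
    next
      case False then show ?thesis using t0 by blast
    qed
  next
    assume "\<tau> \<noteq> 0"
    then have "edge e" using t0 by blast
    then show "2 * r \<le> norm \<tau>" by (auto simp: r_def)
  next
    assume t: "\<tau> = 0"
    then have ne: "\<not> edge e" using tnz by blast
    show "ball p r \<subseteq> Dreg"
    proof
      fix z assume z: "z \<in> ball p r"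
      consider "0 < hs e j z" | "hs e j z < 0" | "hs e j z = 0" by fastforce
      then show "z \<in> Dreg"
      proof cases
        case 1 then show ?thesis using inHex[OF z] Hex_Dreg by blast
      next
        case 2 then show ?thesis using inHex2[OF z] Hex_Dreg t by auto
      next
        case 3 then show ?thesis using inSd[OF z] cut_D[OF ne] by blast
      qed
    qed
  qed
  have c2: "\<forall>z\<in>ball p r. 0 \<le> hs e j z \<longrightarrow> z \<in> cH j"
    using inHex inSd unfolding cH_def by (metis UN_I UNIV_I UnCI order_le_less)
  have c3: "\<forall>z\<in>ball p r. hs e j z < 0 \<longrightarrow> z + ts e j \<in> Hex (js e j)"
    using inHex2 by (simp add: \<tau>_def i_def)
  show ?thesis using ok rpos c2 c3 by (auto simp: \<tau>_def)
qed

lemma hex_chart: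
  assumes p: "p \<in> Hex j"
  shows "\<exists>r>0. chart_ok p r 0 (\<lambda>_. 1) \<and> ball p r \<subseteq> Hex j"
proof -
  obtain r where r: "r > 0" "\<forall>z\<in>ball p r. \<forall>e\<in>UNIV. 0 < hs e j z"
    using pos_near[of UNIV j p] p by (auto simp: Hex_def)
  have b: "ball p r \<subseteq> Hex j" using r by (auto simp: Hex_def)
  have "chart_ok p r 0 (\<lambda>_. 1)"
    unfolding chart_ok_def using r(1) b Hex_Dreg by auto
  then show ?thesis using r(1) b by blast
qed

definition Gs :: "real^2 \<Rightarrow> real^2" where "Gs y = gm (SOME j. y \<in> cH j) y"

lemma Sd_step: "y \<in> Sd e j \<Longrightarrow> pr (gm (js e j) (y + ts e j)) = pr (gm j y)"
proof -
  assume y: "y \<in> Sd e j"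
  have "gm (js e j) (y + ts e j) = gm j y + ts (nx e) j" using gm_ts Sd_valid[OF y] by blast
  moreover have "gm j y \<in> Sd (nx e) j" using gm_Sd[OF y] .
  then have "(gm j y, gm j y + ts (nx e) j) \<in> rel" by (rule Sd_rel)
  ultimately show ?thesis using pr_eq_rel by metis
qed

lemma G_prop: assumes "y \<in> cH j" shows "pr (Gs y) = pr (gm j y)"
proof -
  define k where "k = (SOME j. y \<in> cH j)"
  have k: "y \<in> cH k" unfolding k_def using assms by (rule someI)
  have cut: "pr (gm a y) = pr (gm (Suc a) y)" if "y \<in> Sd DE a" for a
  proof -
    have "y \<in> Sd AB (Suc a)" using that Sd_DE by simp
    then show ?thesis using Sd_step[of y AB "Suc a"] by (simp add: ts_def js_def)
  qed
  consider "k = j" | "j < k" | "k < j" by linarith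
  then show ?thesis
  proof cases
    case 1 then show ?thesis by (simp add: Gs_def k_def[symmetric])
  next
    case 2 then show ?thesis using cH_overlap[OF assms k] cut by (simp add: Gs_def k_def[symmetric])
  next
    case 3 then show ?thesis using cH_overlap[OF k assms] cut by (simp add: Gs_def k_def[symmetric])
  qed
qed

lemma Gs_YY: "y \<in> YY \<Longrightarrow> Gs y \<in> YY"
proof -
  assume "y \<in> YY"
  then obtain j where j: "y \<in> cH j" using YY_cover by blast
  define k where "k = (SOME j. y \<in> cH j)"
  have k: "y \<in> cH k" unfolding k_def using j by (rule someI)
  then show ?thesis using gm_cH cH_YY by (auto simp: Gs_def k_def[symmetric])
qed

lemma G_Sd: assumes "y \<in> Sd e j" shows "pr (Gs (y + ts e j)) = pr (Gs y)"
proof -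
  have y1: "y \<in> cH j" using assms by (auto simp: cH_def)
  have y2: "y + ts e j \<in> cH (js e j)" using Sd_opp[OF assms] by (auto simp: cH_def)
  show ?thesis using G_prop[OF y1] G_prop[OF y2] Sd_step[OF assms] by simp
qed

lemma G_welldef: assumes "(y, y') \<in> rel" shows "pr (Gs y) = pr (Gs y')"
proof -
  have gl: "pr (Gs p) = pr (Gs q)" if "glueR p q" for p q
  proof -
    from that consider j where "p \<in> LH j" "q = p + tauH j" | j where "1 \<le> j" "p \<in> LV j" "q = p + tauV j"
      unfolding glueR_def by blast
    then show ?thesis
    proof cases
      case (1 j)
      then have "p \<in> Sd BC j" "q = p + ts BC j" by (simp_all add: Sd_BC ts_def tauH_def)
      then show ?thesis using G_Sd by metis
    next
      case (2 j)
      then have "p \<in> Sd CD j" "q = p + ts CD j" by (simp_all add: Sd_CD ts_def tauV_def)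
      then show ?thesis using G_Sd by metis
    qed
  qed
  show ?thesis using assms rel_iff gl by metis
qed

definition ff :: "(real^2) set \<Rightarrow> (real^2) set" where "ff P = pr (Gs (SOME y. y \<in> P))"

lemma pr_self: "y \<in> YY \<Longrightarrow> y \<in> pr y"
  using rel_iff by (auto simp: ladder_proj_def)

lemma ff_pr: assumes "y \<in> YY" shows "ff (pr y) = pr (Gs y)"
proof -
  define y' where "y' = (SOME y'. y' \<in> pr y)"
  have "y' \<in> pr y" unfolding y'_def using pr_self[OF assms] by (rule someI)
  then have "(y, y') \<in> rel" by (simp add: ladder_proj_def)
  then show ?thesis using G_welldef by (simp add: ff_def y'_def)
qed

lemma ff_cH: "y \<in> cH j \<Longrightarrow> ff (pr y) = pr (gm j y)"
  using ff_pr G_prop cH_YY by blast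

lemma ff_X: "P \<in> XX \<Longrightarrow> ff P \<in> XX"
  using X_pr ff_pr Gs_YY pr_in_X by metis

lemma ff3: assumes "P \<in> XX" shows "ff (ff (ff P)) = P"
proof -
  obtain y where y: "y \<in> YY" "P = pr y" using X_pr assms by blast
  obtain j where j: "y \<in> cH j" using YY_cover y by blast
  have "ff P = pr (gm j y)" using ff_cH j y by simp
  moreover have "ff (pr (gm j y)) = pr (gm j (gm j y))" using ff_cH gm_cH j by blast
  moreover have "ff (pr (gm j (gm j y))) = pr (gm j (gm j (gm j y)))" using ff_cH gm_cH j by blast
  ultimately show ?thesis using gm3 y by simp
qed

end


context lad begin

lemma gm_cont: "continuous_on S (gm j)"
proof -
  have "gm j = (\<lambda>z. Rmat *v z + pt (sg j) 0)" using gm_Rmat by (simp add: fun_eq_iff)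
  then show ?thesis by (simp add: continuous_intros)
qed

lemma chart_affine:
  assumes ok: "chart_ok p r \<tau> h" and ok': "chart_ok p' r' \<tau>' h'" and rr: "2*r \<le> r'"
    and gp: "gm j p = p'"
    and comm: "\<And>z. z \<in> ball p r \<Longrightarrow> ff (pr (lift \<tau> h z)) = pr (lift \<tau>' h' (gm j z))"
  shows "(\<forall>Q \<in> chW p r \<tau> h. chphi p' r' \<tau>' h' (ff Q) = Rmat *v chphi p r \<tau> h Q + pt (sg j) 0)
     \<and> ff ` chW p r \<tau> h \<subseteq> chW p' r' \<tau>' h'
     \<and> continuous_map (subtopology TT (chW p r \<tau> h)) TT ff"
proof -
  have gball: "gm j z \<in> ball p' r'" if "z \<in> ball p r" for z
  proof -
    have "dist (gm j p) (gm j z) \<le> 2 * dist p z" by (rule gm_lip)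
    then show ?thesis using that rr gp by (simp add: mem_ball)
  qed
  have A: "\<forall>Q \<in> chW p r \<tau> h. chphi p' r' \<tau>' h' (ff Q) = Rmat *v chphi p r \<tau> h Q + pt (sg j) 0"
  proof
    fix Q assume "Q \<in> chW p r \<tau> h"
    then obtain z where z: "z \<in> ball p r" "Q = pr (lift \<tau> h z)" unfolding chW_def by blast
    have "chphi p r \<tau> h Q = z" using phi_pr[OF ok z(1)] z(2) by simp
    moreover have "chphi p' r' \<tau>' h' (ff Q) = gm j z"
      using comm[OF z(1)] phi_pr[OF ok' gball[OF z(1)]] z(2) by simp
    ultimately show "chphi p' r' \<tau>' h' (ff Q) = Rmat *v chphi p r \<tau> h Q + pt (sg j) 0"
      by (simp add: gm_Rmat)
  qed
  have B: "ff ` chW p r \<tau> h \<subseteq> chW p' r' \<tau>' h'"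
  proof
    fix x assume "x \<in> ff ` chW p r \<tau> h"
    then obtain z where z: "z \<in> ball p r" "x = ff (pr (lift \<tau> h z))" unfolding chW_def by blast
    then show "x \<in> chW p' r' \<tau>' h'" using comm[OF z(1)] gball[OF z(1)] unfolding chW_def by auto
  qed
  have C: "continuous_map (subtopology TT (chW p r \<tau> h)) TT ff"
  proof (rule continuous_map_eq)
    have c1: "continuous_map (subtopology TT (chW p r \<tau> h)) (top_of_set (ball p r)) (chphi p r \<tau> h)"
      by (rule phi_cont[OF ok])
    have c2: "continuous_map (top_of_set (ball p r)) (top_of_set (ball p' r')) (gm j)"
      using gball gm_cont by (auto simp: continuous_map_in_subtopology)
    have c3: "continuous_map (top_of_set (ball p' r')) TT (\<lambda>z. pr (lift \<tau>' h' z))"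
      using psi_cont[OF ok'] continuous_map_into_fulltopology by blast
    show "continuous_map (subtopology TT (chW p r \<tau> h)) TT ((\<lambda>z. pr (lift \<tau>' h' z)) \<circ> gm j \<circ> chphi p r \<tau> h)"
      using continuous_map_compose[OF continuous_map_compose[OF c1 c2] c3] by (simp add: o_assoc)
  next
    fix Q assume "Q \<in> topspace (subtopology TT (chW p r \<tau> h))"
    then have "Q \<in> chW p r \<tau> h" by (simp add: topspace_subtopology)
    then obtain z where z: "z \<in> ball p r" "Q = pr (lift \<tau> h z)" unfolding chW_def by blast
    show "((\<lambda>z. pr (lift \<tau>' h' z)) \<circ> gm j \<circ> chphi p r \<tau> h) Q = ff Q"
      using phi_pr[OF ok z(1)] comm[OF z(1)] z(2) by simp
  qed
  show ?thesis using A B C by blast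
qed

lemma local_affine:
  assumes P: "P \<in> XX"
  shows "\<exists>W \<phi> W' \<psi> t. translation_chart lam W \<phi> \<and> translation_chart lam W' \<psi> \<and> openin TT W \<and> P \<in> W
     \<and> ff ` W \<subseteq> W' \<and> (\<forall>Q\<in>W. \<psi> (ff Q) = Rmat *v \<phi> Q + t) \<and> continuous_map (subtopology TT W) TT ff"
proof -
  obtain y where y: "y \<in> YY" "P = pr y" using X_pr P by blast
  obtain j where j: "y \<in> cH j" using YY_cover y by blast
  have main: "\<exists>W \<phi> W' \<psi> t. translation_chart lam W \<phi> \<and> translation_chart lam W' \<psi> \<and> openin TT W \<and> P \<in> W
     \<and> ff ` W \<subseteq> W' \<and> (\<forall>Q\<in>W. \<psi> (ff Q) = Rmat *v \<phi> Q + t) \<and> continuous_map (subtopology TT W) TT ff"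
    if ok: "chart_ok y r \<tau> h" and ok': "chart_ok (gm j y) r' \<tau>' h'" and rr: "2*r \<le> r'"
      and comm: "\<And>z. z \<in> ball y r \<Longrightarrow> ff (pr (lift \<tau> h z)) = pr (lift \<tau>' h' (gm j z))"
      and ly: "lift \<tau> h y = y"
    for r \<tau> h r' \<tau>' h'
  proof -
    have r0: "0 < r" using ok by (simp add: chart_ok_def)
    have Pin: "P \<in> chW y r \<tau> h" using y(2) ly r0 unfolding chW_def by (metis centre_in_ball image_eqI)
    show ?thesis
      using chart_affine[OF ok ok' rr refl comm] chart_is_translation_chart[OF ok] chart_is_translation_chart[OF ok']
        chW_open[OF ok] Pin by blast
  qed
  have "y \<in> Hex j \<or> (\<exists>e. y \<in> Sd e j)" using j by (auto simp: cH_def)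
  then show ?thesis
  proof
    assume yH: "y \<in> Hex j"
    obtain r0 where r0: "r0 > 0" "chart_ok y r0 0 (\<lambda>_. 1)" "ball y r0 \<subseteq> Hex j"
      using hex_chart[OF yH] by blast
    obtain r0' where r0': "r0' > 0" "chart_ok (gm j y) r0' 0 (\<lambda>_. 1)" "ball (gm j y) r0' \<subseteq> Hex j"
      using hex_chart[OF gm_Hex[OF yH]] by blast
    define r where "r = min r0 (r0'/2)"
    have okr: "chart_ok y r 0 (\<lambda>_. 1)" using chart_ok_mono[OF r0(2)] r0 r0' by (simp add: r_def)
    have comm: "ff (pr (lift 0 (\<lambda>_. 1) z)) = pr (lift 0 (\<lambda>_. 1) (gm j z))" if "z \<in> ball y r" for z
    proof -
      have "z \<in> cH j" using that r0(3) by (auto simp: r_def cH_def)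
      then show ?thesis using ff_cH by (simp add: lift_def)
    qed
    show ?thesis by (rule main[OF okr r0'(2) _ comm]) (auto simp: r_def lift_def)
  next
    assume "\<exists>e. y \<in> Sd e j"
    then obtain e where ye: "y \<in> Sd e j" by blast
    obtain r0 where r0: "r0 > 0" "chart_ok y r0 (ts e j) (hs e j)"
      "\<forall>z\<in>ball y r0. 0 \<le> hs e j z \<longrightarrow> z \<in> cH j"
      "\<forall>z\<in>ball y r0. hs e j z < 0 \<longrightarrow> z + ts e j \<in> Hex (js e j)"
      using side_chart[OF ye] by blast
    obtain r0' where r0': "r0' > 0" "chart_ok (gm j y) r0' (ts (nx e) j) (hs (nx e) j)"
      using side_chart[OF gm_Sd[OF ye]] by blast
    define r where "r = min r0 (r0'/2)"
    have okr: "chart_ok y r (ts e j) (hs e j)" using chart_ok_mono[OF r0(2)] r0 r0' by (simp add: r_def)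
    have v: "valid e j" using Sd_valid ye by blast
    have comm: "ff (pr (lift (ts e j) (hs e j) z)) = pr (lift (ts (nx e) j) (hs (nx e) j) (gm j z))"
      if z: "z \<in> ball y r" for z
    proof (cases "0 \<le> hs e j z")
      case True
      have "z \<in> cH j" using r0(3) z True by (auto simp: r_def)
      then show ?thesis using ff_cH True by (simp add: lift_def hs_nx_gm)
    next
      case False
      have "z + ts e j \<in> Hex (js e j)" using r0(4) z False by (auto simp: r_def)
      then have "ff (pr (z + ts e j)) = pr (gm (js e j) (z + ts e j))" using ff_cH by (auto simp: cH_def)
      then show ?thesis using False gm_ts[OF v] by (simp add: lift_def hs_nx_gm)
    qed
    have ly: "lift (ts e j) (hs e j) y = y" using ye by (simp add: lift_def Sd_def)
    show ?thesis by (rule main[OF okr r0'(2) _ comm ly]) (auto simp: r_def)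
  qed
qed

lemma ff_cont: "continuous_map TT TT ff"
proof (rule cont_local)
  fix P assume "P \<in> topspace TT"
  then have "P \<in> XX" by (simp add: topspace_TT)
  then show "\<exists>U. openin TT U \<and> P \<in> U \<and> continuous_map (subtopology TT U) TT ff"
    using local_affine by blast
next
  show "ff \<in> topspace TT \<rightarrow> topspace TT" using ff_X by (simp add: topspace_TT)
qed

lemma ff_homeo: "homeomorphic_map TT TT ff"
  unfolding homeomorphic_map_maps
proof (intro exI[of _ "ff \<circ> ff"])
  show "homeomorphic_maps TT TT ff (ff \<circ> ff)"
    unfolding homeomorphic_maps_def
    using ff_cont continuous_map_compose[OF ff_cont ff_cont] ff3 ff_X by (simp add: topspace_TT)
qed

lemma ff_affine: "ladder_affine_homeo lam Rmat ff"
  unfolding ladder_affine_homeo_def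
proof (intro conjI ff_homeo ballI)
  fix P assume P: "P \<in> XX"
  obtain W \<phi> W' \<psi> t where H: "translation_chart lam W \<phi>" "translation_chart lam W' \<psi>" "openin TT W" "P \<in> W"
    "ff ` W \<subseteq> W'" "\<forall>Q\<in>W. \<psi> (ff Q) = Rmat *v \<phi> Q + t"
    using local_affine[OF P] by blast
  show "\<exists>W \<phi> W' \<psi> N t. translation_chart lam W \<phi> \<and> translation_chart lam W' \<psi> \<and> openin TT N \<and> P \<in> N \<and>
      N \<subseteq> W \<and> ff ` N \<subseteq> W' \<and> (\<forall>Q\<in>N. \<psi> (ff Q) = Rmat *v \<phi> Q + t)"
    using H by blast
qed

end

lemma Rmat_entries: "Rmat $ 1 $ 1 = -1" "Rmat $ 1 $ 2 = -1" "Rmat $ 2 $ 1 = 1" "Rmat $ 2 $ 2 = 0"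
  by (simp_all add: Rmat_def)

lemma Rmat_det: "det Rmat = 1"
  by (simp add: det_2 Rmat_entries)

lemma Rmat_sq: "Rmat ** Rmat = vector [vector [0, 1], vector [-1, -1]]"
  by (simp add: vec_eq_iff forall_2 matrix_matrix_mult_def sum_2 Rmat_entries)

lemma Rmat_cube: "Rmat ** Rmat ** Rmat = mat 1"
proof -
  have "Rmat ** Rmat ** Rmat = Rmat ** (Rmat ** Rmat)" by (simp add: matrix_mul_assoc)
  then show ?thesis
    by (simp add: Rmat_sq vec_eq_iff forall_2 matrix_matrix_mult_def sum_2 Rmat_entries mat_def)
qed

theorem mainTheorem7:
  fixes lam :: real
  assumes "0 < lam" and "lam < 1"
  shows "(\<exists>f. orientation_preserving_affine lam Rmat f)
    \<and> \<bar>Rmat $ 1 $ 1 + Rmat $ 2 $ 2\<bar> < 2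
    \<and> Rmat ** Rmat ** Rmat = mat 1
    \<and> Rmat \<noteq> mat 1 \<and> Rmat \<noteq> - mat 1
    \<and> Rmat ** Rmat \<noteq> mat 1 \<and> Rmat ** Rmat \<noteq> - mat 1"
proof -
  interpret lad lam using assms by unfold_locales
  have "orientation_preserving_affine lam Rmat ff"
    unfolding orientation_preserving_affine_def using ff_affine Rmat_det by simp
  moreover have "Rmat \<noteq> mat 1" "Rmat \<noteq> - mat 1"
    by (auto simp: vec_eq_iff forall_2 Rmat_entries mat_def)
  moreover have "Rmat ** Rmat \<noteq> mat 1" "Rmat ** Rmat \<noteq> - mat 1"
    by (auto simp: Rmat_sq vec_eq_iff forall_2 mat_def)
  ultimately show ?thesis using Rmat_cube by (auto simp: Rmat_entries)
qed


end
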